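(* Let $\mathcal A_{ML}$ be the MLMC estimator based on $\{X_\ell\}$ satisfying Assumption A with $\gamma\ge\beta$, suppose Assumption B holds, and suppose that for every $\nu>0$ $$\lim_{\ell\to\infty}\mathbf 1_{\{V_\ell>0\}}\,\mathbb E\Big[\frac{|\Delta_\ell X-\mathbb E[\Delta_\ell X]|^2}{V_\ell}\mathbf 1\Big\{\frac{|\Delta_\ell X-\mathbb E[\Delta_\ell X]|^2}{V_\ell}>e^{(2\alpha-\gamma)\ell}S_\ell^2\,\nu\Big\}\Big]=0.$$ Then the normalized MLMC estimator satisfies the extended CLT condition.
   Context: Let $(\Omega,\mathcal F,\mathbb P)$ be a probability space, $X\in L^2(\Omega)$ a real random variable and $\{X_\ell\}_{\ell=-1}^\infty\subset L^2(\Omega)$ with $X_{-1}:=0$. Put $\Delta_\ell X:=X_\ell-X_{\ell-1}$, $V_\ell:=\mathrm{Var}(\Delta_\ell X)$, and let $C_\ell>0$ denote the (given) cost of sampling $\Delta_\ell X$. Assumption A: there are positive constants $\alpha,\beta,\gamma$ with $\min(\beta,\gamma)\le 2\alpha$, and $c_\alpha>0$, such that for all $\ell\in\mathbb N_0$: $|\mathbb E[X-X_\ell]|\le c_\alpha e^{-\alpha\ell}$; $V_\ell\le C e^{-\beta\ell}$ for some constant $C>0$; and $c e^{\gamma\ell}<C_\ell<C' e^{\gamma\ell}$ for constants $0<c<C'$. Define $S_k:=\sum_{\ell=0}^k\sqrt{V_\ell C_\ell}$. MLMC estimator: for $\epsilon>0$, $L(\epsilon):=\max(\lceil \log(c_\alpha\epsilon^{-1})/\alpha\rceil,1)$,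 $M_\ell(\epsilon):=\max\big(\lceil \epsilon^{-2}\sqrt{V_\ell/C_\ell}\,S_{L(\epsilon)}\rceil,1\big)$, and $\mathcal A_{ML}(\epsilon):=\sum_{\ell=0}^{L(\epsilon)}\frac{1}{M_\ell(\epsilon)}\sum_{i=1}^{M_\ell(\epsilon)}\Delta_\ell X^i$, where the family $\{\Delta_\ell X^i\}$ is mutually independent and each $\Delta_\ell X^i$ has the law of $\Delta_\ell X$. Conventions: $0\cdot(\pm\infty)=0$, $0/0=0$. Assumption B: $V_0>0$; if $\beta=\gamma$ then $\lim_{k\to\infty}S_k=\infty$; if $\gamma>\beta$ then $\beta<2\alpha$ and there exists $\upsilon\in[\beta,2\alpha)$ with $\liminf_{k\to\infty}S_k e^{(\upsilon-\gamma)k/2}>1$. Extended CLT condition: $\frac{\mathcal A_{ML}(\epsilon)-\mathbb E[X_{L(\epsilon)}]}{\sqrt{\mathrm{Var}(\mathcal A_{ML}(\epsilon))}}\xrightarrow{d}\mathcal N(0,1)$ as $\epsilon\downarrow0$, and $\lim_{\epsilon\downarrow0}\max_{0\le\ell\le L(\epsilon)}\frac{V_\ell}{M_\ell(\epsilon)^2\,\mathrm{Var}(\mathcal A_{ML}(\epsilon))}=0$. *)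

theory Defs
  imports "HOL-Probability.Probability"
begin

text \<open>Level differences, with the convention X_{-1} = 0.\<close>
definition dlt :: "(nat \<Rightarrow> 'a \<Rightarrow> real) \<Rightarrow> nat \<Rightarrow> 'a \<Rightarrow> real" where
  "dlt X l = (\<lambda>\<omega>. X l \<omega> - (if l = 0 then 0 else X (l - 1) \<omega>))"

definition expct :: "'a measure \<Rightarrow> ('a \<Rightarrow> real) \<Rightarrow> real" where
  "expct M f = (\<integral>\<omega>. f \<omega> \<partial>M)"

definition var :: "'a measure \<Rightarrow> ('a \<Rightarrow> real) \<Rightarrow> real" where
  "var M f = (\<integral>\<omega>. (f \<omega> - expct M f)\<^sup>2 \<partial>M)"

definition Vl :: "'a measure \<Rightarrow> (nat \<Rightarrow> 'a \<Rightarrow> real) \<Rightarrow> nat \<Rightarrow> real" where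
  "Vl M X l = var M (dlt X l)"

definition Ssum :: "'a measure \<Rightarrow> (nat \<Rightarrow> 'a \<Rightarrow> real) \<Rightarrow> (nat \<Rightarrow> real) \<Rightarrow> nat \<Rightarrow> real" where
  "Ssum M X Cost k = (\<Sum>l\<le>k. sqrt (Vl M X l * Cost l))"

definition Lev :: "real \<Rightarrow> real \<Rightarrow> real \<Rightarrow> nat" where
  "Lev calpha alpha eps = nat (max \<lceil>ln (calpha / eps) / alpha\<rceil> 1)"

definition Msamp :: "'a measure \<Rightarrow> (nat \<Rightarrow> 'a \<Rightarrow> real) \<Rightarrow> (nat \<Rightarrow> real) \<Rightarrow> real \<Rightarrow> real \<Rightarrow> real \<Rightarrow> nat \<Rightarrow> nat" where
  "Msamp M X Cost calpha alpha eps l =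
     nat (max \<lceil>(1 / eps\<^sup>2) * sqrt (Vl M X l / Cost l) * Ssum M X Cost (Lev calpha alpha eps)\<rceil> 1)"

text \<open>The MLMC estimator, built from i.i.d. copies Y l i (i >= 1) of Delta_l X living on N.\<close>
definition mlmc :: "'a measure \<Rightarrow> (nat \<Rightarrow> 'a \<Rightarrow> real) \<Rightarrow> (nat \<Rightarrow> real) \<Rightarrow> real \<Rightarrow> real
     \<Rightarrow> (nat \<Rightarrow> nat \<Rightarrow> 'b \<Rightarrow> real) \<Rightarrow> real \<Rightarrow> 'b \<Rightarrow> real" where
  "mlmc M X Cost calpha alpha Y eps =
     (\<lambda>\<omega>. \<Sum>l\<le>Lev calpha alpha eps.
        (1 / real (Msamp M X Cost calpha alpha eps l)) *
        (\<Sum>i\<in>{1..Msamp M X Cost calpha alpha eps l}. Y l i \<omega>))"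

text \<open>Convergence in distribution as eps tends to 0 from the right: along every
  positive null sequence, weak convergence (of cdfs at continuity points).\<close>
definition conv_distr_at_right0 :: "(real \<Rightarrow> real measure) \<Rightarrow> real measure \<Rightarrow> bool" where
  "conv_distr_at_right0 \<mu> \<nu> \<longleftrightarrow>
     (\<forall>e :: nat \<Rightarrow> real. (\<forall>n. e n > 0) \<longrightarrow> e \<longlonglongrightarrow> 0 \<longrightarrow> weak_conv_m (\<lambda>n. \<mu> (e n)) \<nu>)"

end

theory Submission
  imports Defs
begin


lemma exp_neg_approx:
  fixes x :: real assumes "x \<ge> 0"
  shows "\<bar>exp (- x) - (1 - x)\<bar> \<le> x\<^sup>2"
proof -
  have l: "1 - x \<le> exp (- x)" using exp_ge_add_one_self[of "-x"] by simp
  have "exp x \<ge> 1 + x" using exp_ge_add_one_self[of x] by simp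
  then have "exp (- x) \<le> 1 / (1 + x)" using assms by (simp add: exp_minus field_simps)
  also have "1 / (1 + x) \<le> 1 - x + x\<^sup>2"
    using assms by (simp add: field_simps power2_eq_square)
  finally show ?thesis using l by (simp add: abs_if)
qed

lemma (in prob_space) lindeberg_bound:
  fixes Z :: "'i \<Rightarrow> 'a \<Rightarrow> real" and \<delta> t :: real
  assumes fin: "finite J" and ind: "indep_vars (\<lambda>_. borel) Z J"
    and int2: "\<And>j. j \<in> J \<Longrightarrow> integrable M (\<lambda>\<omega>. (Z j \<omega>)\<^sup>2)"
    and mean: "\<And>j. j \<in> J \<Longrightarrow> expectation (Z j) = 0"
    and tot: "(\<Sum>j\<in>J. expectation (\<lambda>\<omega>. (Z j \<omega>)\<^sup>2)) = 1"
    and dpos: "\<delta> > 0"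
  shows "cmod (char (distr M borel (\<lambda>\<omega>. \<Sum>j\<in>J. Z j \<omega>)) t - complex_of_real (exp (- (t\<^sup>2) / 2)))
     \<le> \<bar>t\<bar>^3 * \<delta> / 6 + t\<^sup>2 * (\<Sum>j\<in>J. expectation (\<lambda>\<omega>. (Z j \<omega>)\<^sup>2 * indicator {\<omega>. (Z j \<omega>)\<^sup>2 > \<delta>\<^sup>2} \<omega>))
       + t^4 * (\<delta>\<^sup>2 + (\<Sum>j\<in>J. expectation (\<lambda>\<omega>. (Z j \<omega>)\<^sup>2 * indicator {\<omega>. (Z j \<omega>)\<^sup>2 > \<delta>\<^sup>2} \<omega>))) / 4"
proof -
  define s where "s j = expectation (\<lambda>\<omega>. (Z j \<omega>)\<^sup>2)" for j
  define lam where "lam j = expectation (\<lambda>\<omega>. (Z j \<omega>)\<^sup>2 * indicator {\<omega>. (Z j \<omega>)\<^sup>2 > \<delta>\<^sup>2} \<omega>)" for j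
  define Lam where "Lam = (\<Sum>j\<in>J. lam j)"
  define x where "x j = t\<^sup>2 * s j / 2" for j
  have rv[measurable]: "random_variable borel (Z j)" if "j \<in> J" for j
    using ind that unfolding indep_vars_def2 by simp
  have intZ: "integrable M (Z j)" if "j \<in> J" for j
    by (rule square_integrable_imp_integrable[OF _ int2[OF that]]) (use that in simp)
  have ind_eq: "indicator {\<omega>. (Z j \<omega>)\<^sup>2 > \<delta>\<^sup>2} \<omega> = (if (Z j \<omega>)\<^sup>2 > \<delta>\<^sup>2 then 1 else (0::real))" for j \<omega>
    by (simp add: indicator_def)
  have intlam: "integrable M (\<lambda>\<omega>. (Z j \<omega>)\<^sup>2 * indicator {\<omega>. (Z j \<omega>)\<^sup>2 > \<delta>\<^sup>2} \<omega>)" if "j \<in> J" for j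
    unfolding ind_eq
    by (rule Bochner_Integration.integrable_bound[OF int2[OF that]]) (use that in auto)
  have s_nn: "s j \<ge> 0" for j unfolding s_def by simp
  have lam_nn: "lam j \<ge> 0" for j unfolding lam_def by (simp add: ind_eq)
  have Lam_nn: "Lam \<ge> 0" unfolding Lam_def by (simp add: sum_nonneg lam_nn)
  have s_le: "s j \<le> \<delta>\<^sup>2 + lam j" if "j \<in> J" for j
  proof -
    have "s j \<le> expectation (\<lambda>\<omega>. \<delta>\<^sup>2 + (Z j \<omega>)\<^sup>2 * indicator {\<omega>. (Z j \<omega>)\<^sup>2 > \<delta>\<^sup>2} \<omega>)"
      unfolding s_def
      by (rule integral_mono) (use that intlam int2 in \<open>auto simp: ind_eq\<close>)
    also have "\<dots> = \<delta>\<^sup>2 + lam j"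
      using that intlam unfolding lam_def by (simp add: prob_space)
    finally show ?thesis .
  qed
  have char_eq: "char (distr M borel (\<lambda>\<omega>. \<Sum>j\<in>J. Z j \<omega>)) t = (\<Prod>j\<in>J. char (distr M borel (Z j)) t)"
    by (rule char_distr_sum[OF ind])
  have exp_eq: "complex_of_real (exp (- (t\<^sup>2) / 2)) = (\<Prod>j\<in>J. complex_of_real (exp (- x j)))"
  proof -
    have "- (t\<^sup>2) / 2 = (\<Sum>j\<in>J. - x j)"
      using tot unfolding x_def s_def by (simp add: sum_negf sum_divide_distrib[symmetric] sum_distrib_left[symmetric])
    then show ?thesis using fin by (simp add: exp_sum)
  qed
  have step: "cmod (char (distr M borel (Z j)) t - complex_of_real (exp (- x j)))
      \<le> \<bar>t\<bar>^3 * \<delta> * s j / 6 + t\<^sup>2 * lam j + (x j)\<^sup>2" if j: "j \<in> J" for j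
  proof -
    have var: "variance (Z j) = s j" using mean[OF j] unfolding s_def by simp
    have a3: "cmod (char (distr M borel (Z j)) t - (1 - t^2 * s j / 2)) \<le>
        (t^2 / 6) * expectation (\<lambda>\<omega>. min (6 * (Z j \<omega>)^2) (\<bar>t\<bar> * \<bar>Z j \<omega>\<bar>^3))"
      by (rule char_approx3'[OF rv[OF j] intZ[OF j] int2[OF j] mean[OF j] var refl])
    have "expectation (\<lambda>\<omega>. min (6 * (Z j \<omega>)^2) (\<bar>t\<bar> * \<bar>Z j \<omega>\<bar>^3))
        \<le> expectation (\<lambda>\<omega>. \<bar>t\<bar> * \<delta> * (Z j \<omega>)\<^sup>2 + 6 * ((Z j \<omega>)\<^sup>2 * indicator {\<omega>. (Z j \<omega>)\<^sup>2 > \<delta>\<^sup>2} \<omega>))"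
    proof (rule integral_mono')
      show "integrable M (\<lambda>\<omega>. \<bar>t\<bar> * \<delta> * (Z j \<omega>)\<^sup>2 + 6 * ((Z j \<omega>)\<^sup>2 * indicator {\<omega>. (Z j \<omega>)\<^sup>2 > \<delta>\<^sup>2} \<omega>))"
        using int2[OF j] intlam[OF j] by auto
      fix \<omega> assume "\<omega> \<in> space M"
      show "0 \<le> \<bar>t\<bar> * \<delta> * (Z j \<omega>)\<^sup>2 + 6 * ((Z j \<omega>)\<^sup>2 * indicator {\<omega>. (Z j \<omega>)\<^sup>2 > \<delta>\<^sup>2} \<omega>)"
        using dpos by (simp add: ind_eq)
      show "min (6 * (Z j \<omega>)^2) (\<bar>t\<bar> * \<bar>Z j \<omega>\<bar>^3) \<le> \<bar>t\<bar> * \<delta> * (Z j \<omega>)\<^sup>2 + 6 * ((Z j \<omega>)\<^sup>2 * indicator {\<omega>. (Z j \<omega>)\<^sup>2 > \<delta>\<^sup>2} \<omega>)"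
      proof (cases "(Z j \<omega>)\<^sup>2 > \<delta>\<^sup>2")
        case True
        have "0 \<le> \<bar>t\<bar> * \<delta> * (Z j \<omega>)\<^sup>2" using dpos by simp
        then show ?thesis using True by (simp add: ind_eq min.coboundedI1)
      next
        case False
        then have "\<bar>Z j \<omega>\<bar> \<le> \<delta>" using dpos by (metis abs_le_square_iff abs_of_pos not_less)
        then have "\<bar>t\<bar> * \<bar>Z j \<omega>\<bar>^3 \<le> \<bar>t\<bar> * \<delta> * (Z j \<omega>)\<^sup>2"
        proof -
          have "\<bar>Z j \<omega>\<bar>^3 = (Z j \<omega>)\<^sup>2 * \<bar>Z j \<omega>\<bar>" by (simp add: power3_eq_cube power2_eq_square)
          also have "\<dots> \<le> (Z j \<omega>)\<^sup>2 * \<delta>" by (rule mult_left_mono) (use \<open>\<bar>Z j \<omega>\<bar> \<le> \<delta>\<close> in auto)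
          finally have "\<bar>Z j \<omega>\<bar>^3 \<le> (Z j \<omega>)\<^sup>2 * \<delta>" .
          then have "\<bar>t\<bar> * \<bar>Z j \<omega>\<bar>^3 \<le> \<bar>t\<bar> * ((Z j \<omega>)\<^sup>2 * \<delta>)" by (rule mult_left_mono) simp
          then show ?thesis by (simp add: ac_simps)
        qed
        then show ?thesis using False by (simp add: ind_eq)
      qed
    qed
    also have "\<dots> = \<bar>t\<bar> * \<delta> * s j + 6 * lam j"
      using int2[OF j] intlam[OF j] unfolding s_def lam_def by simp
    finally have e: "expectation (\<lambda>\<omega>. min (6 * (Z j \<omega>)^2) (\<bar>t\<bar> * \<bar>Z j \<omega>\<bar>^3)) \<le> \<bar>t\<bar> * \<delta> * s j + 6 * lam j" .
    have a3': "cmod (char (distr M borel (Z j)) t - complex_of_real (1 - x j)) \<le> \<bar>t\<bar>^3 * \<delta> * s j / 6 + t\<^sup>2 * lam j"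
    proof -
      have "(t^2 / 6) * expectation (\<lambda>\<omega>. min (6 * (Z j \<omega>)^2) (\<bar>t\<bar> * \<bar>Z j \<omega>\<bar>^3)) \<le> (t^2/6) * (\<bar>t\<bar> * \<delta> * s j + 6 * lam j)"
        by (rule mult_left_mono[OF e]) simp
      also have "\<dots> = \<bar>t\<bar>^3 * \<delta> * s j / 6 + t\<^sup>2 * lam j"
        by (simp add: field_simps power2_eq_square power3_eq_cube)
      finally show ?thesis using a3 unfolding x_def by simp
    qed
    have b: "cmod (complex_of_real (1 - x j) - complex_of_real (exp (- x j))) \<le> (x j)\<^sup>2"
    proof -
      have "cmod (complex_of_real (1 - x j) - complex_of_real (exp (- x j))) = \<bar>exp (- x j) - (1 - x j)\<bar>"
        by (metis norm_minus_commute norm_of_real of_real_diff real_norm_def)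
      also have "\<dots> \<le> (x j)\<^sup>2" by (rule exp_neg_approx) (simp add: x_def s_nn)
      finally show ?thesis .
    qed
    have "cmod (char (distr M borel (Z j)) t - complex_of_real (exp (- x j)))
       \<le> cmod (char (distr M borel (Z j)) t - complex_of_real (1 - x j)) + cmod (complex_of_real (1 - x j) - complex_of_real (exp (- x j)))"
      using norm_triangle_ineq[of "char (distr M borel (Z j)) t - complex_of_real (1 - x j)" "complex_of_real (1 - x j) - complex_of_real (exp (- x j))"] by simp
    then show ?thesis using a3' b by linarith
  qed
  have "cmod (char (distr M borel (\<lambda>\<omega>. \<Sum>j\<in>J. Z j \<omega>)) t - complex_of_real (exp (- (t\<^sup>2) / 2)))
     = cmod ((\<Prod>j\<in>J. char (distr M borel (Z j)) t) - (\<Prod>j\<in>J. complex_of_real (exp (- x j))))"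
    using char_eq exp_eq by simp
  also have "\<dots> \<le> (\<Sum>j\<in>J. cmod (char (distr M borel (Z j)) t - complex_of_real (exp (- x j))))"
  proof (rule norm_prod_diff)
    fix j assume j: "j \<in> J"
    interpret rd: real_distribution "distr M borel (Z j)" by (rule real_distribution_distr[OF rv[OF j]])
    show "cmod (char (distr M borel (Z j)) t) \<le> 1" by (rule rd.cmod_char_le_1)
    show "cmod (complex_of_real (exp (- x j))) \<le> 1" using s_nn[of j] by (simp add: x_def)
  qed
  also have "\<dots> \<le> (\<Sum>j\<in>J. \<bar>t\<bar>^3 * \<delta> * s j / 6 + t\<^sup>2 * lam j + (x j)\<^sup>2)"
    by (rule sum_mono) (rule step)
  also have "\<dots> = \<bar>t\<bar>^3 * \<delta> / 6 * (\<Sum>j\<in>J. s j) + t\<^sup>2 * Lam + (\<Sum>j\<in>J. (x j)\<^sup>2)"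
    unfolding Lam_def sum.distrib sum_distrib_left by (simp add: sum_divide_distrib mult.assoc)
  also have "(\<Sum>j\<in>J. s j) = 1" using tot unfolding s_def .
  also have "(\<Sum>j\<in>J. (x j)\<^sup>2) \<le> (\<Sum>j\<in>J. x j * (t\<^sup>2 * (\<delta>\<^sup>2 + Lam) / 2))"
  proof (rule sum_mono)
    fix j assume j: "j \<in> J"
    have "lam j \<le> Lam" unfolding Lam_def by (rule member_le_sum[OF j]) (auto simp: lam_nn fin)
    then have "x j \<le> t\<^sup>2 * (\<delta>\<^sup>2 + Lam) / 2" using s_le[OF j] unfolding x_def
      by (intro divide_right_mono mult_left_mono) auto
    moreover have "x j \<ge> 0" by (simp add: x_def s_nn)
    ultimately show "(x j)\<^sup>2 \<le> x j * (t\<^sup>2 * (\<delta>\<^sup>2 + Lam) / 2)"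
      unfolding power2_eq_square[of "x j"] by (metis mult_left_mono)
  qed
  also have "(\<Sum>j\<in>J. x j * (t\<^sup>2 * (\<delta>\<^sup>2 + Lam) / 2)) = t^4 * (\<delta>\<^sup>2 + Lam) / 4"
  proof -
    have "(\<Sum>j\<in>J. x j) = t\<^sup>2 / 2" using tot unfolding x_def s_def
      by (simp add: sum_divide_distrib[symmetric] sum_distrib_left[symmetric])
    then have "(\<Sum>j\<in>J. x j * (t\<^sup>2 * (\<delta>\<^sup>2 + Lam) / 2)) = t\<^sup>2 / 2 * (t\<^sup>2 * (\<delta>\<^sup>2 + Lam) / 2)"
      by (simp only: sum_distrib_right[symmetric])
    then show ?thesis by (simp add: field_simps power2_eq_square power4_eq_xxxx)
  qed
  finally show ?thesis unfolding Lam_def lam_def by simp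
qed


lemma transfer_int:
  fixes f :: "real \<Rightarrow> real"
  assumes law: "distr N borel Yv = distr M borel D" and [measurable]: "Yv \<in> borel_measurable N" "D \<in> borel_measurable M"
    and [measurable]: "f \<in> borel_measurable borel"
  shows "integral\<^sup>L N (\<lambda>\<omega>. f (Yv \<omega>)) = integral\<^sup>L M (\<lambda>\<omega>. f (D \<omega>))"
    and "integrable N (\<lambda>\<omega>. f (Yv \<omega>)) \<longleftrightarrow> integrable M (\<lambda>\<omega>. f (D \<omega>))"
proof -
  show "integral\<^sup>L N (\<lambda>\<omega>. f (Yv \<omega>)) = integral\<^sup>L M (\<lambda>\<omega>. f (D \<omega>))"
    using integral_distr[of Yv N borel f] integral_distr[of D M borel f] law by simp
  show "integrable N (\<lambda>\<omega>. f (Yv \<omega>)) \<longleftrightarrow> integrable M (\<lambda>\<omega>. f (D \<omega>))"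
    using integrable_distr_eq[of Yv N borel f] integrable_distr_eq[of D M borel f] law by simp
qed

lemma (in prob_space) var_sum_indep:
  fixes W :: "'i \<Rightarrow> 'a \<Rightarrow> real"
  assumes "finite J" and ind: "indep_vars (\<lambda>_. borel) W J"
    and int2: "\<And>j. j \<in> J \<Longrightarrow> integrable M (\<lambda>\<omega>. (W j \<omega>)\<^sup>2)"
    and mean: "\<And>j. j \<in> J \<Longrightarrow> expectation (W j) = 0"
  shows "integrable M (\<lambda>\<omega>. (\<Sum>j\<in>J. W j \<omega>)\<^sup>2) \<and> integrable M (\<lambda>\<omega>. \<Sum>j\<in>J. W j \<omega>) \<and>
    expectation (\<lambda>\<omega>. (\<Sum>j\<in>J. W j \<omega>)\<^sup>2) = (\<Sum>j\<in>J. expectation (\<lambda>\<omega>. (W j \<omega>)\<^sup>2))"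
  using assms
proof (induction J rule: finite_induct)
  case empty
  then show ?case by simp
next
  case (insert x F)
  have indF: "indep_vars (\<lambda>_. borel) W F" using indep_vars_subset[OF insert.prems(1)] by auto
  have IH: "integrable M (\<lambda>\<omega>. (\<Sum>j\<in>F. W j \<omega>)\<^sup>2)" "integrable M (\<lambda>\<omega>. \<Sum>j\<in>F. W j \<omega>)"
     "expectation (\<lambda>\<omega>. (\<Sum>j\<in>F. W j \<omega>)\<^sup>2) = (\<Sum>j\<in>F. expectation (\<lambda>\<omega>. (W j \<omega>)\<^sup>2))"
    using insert.IH[OF indF] insert.prems by auto
  have rv[measurable]: "random_variable borel (W j)" if "j \<in> insert x F" for j
    using insert.prems(1) that unfolding indep_vars_def2 by auto
  have intx: "integrable M (W x)"
    by (rule square_integrable_imp_integrable[OF _ insert.prems(2)]) auto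
  have iv: "indep_var borel (W x) borel (\<lambda>\<omega>. \<Sum>j\<in>F. W j \<omega>)"
    by (rule indep_vars_sum[OF insert(1,2) insert.prems(1)])
  have prod0: "expectation (\<lambda>\<omega>. W x \<omega> * (\<Sum>j\<in>F. W j \<omega>)) = 0"
    using indep_var_lebesgue_integral[OF iv intx IH(2)] insert.prems(3)[of x] by simp
  have intp: "integrable M (\<lambda>\<omega>. W x \<omega> * (\<Sum>j\<in>F. W j \<omega>))"
    by (rule indep_var_integrable[OF iv intx IH(2)])
  have eq: "(\<lambda>\<omega>. (\<Sum>j\<in>insert x F. W j \<omega>)\<^sup>2) = (\<lambda>\<omega>. (W x \<omega>)\<^sup>2 + 2 * (W x \<omega> * (\<Sum>j\<in>F. W j \<omega>)) + (\<Sum>j\<in>F. W j \<omega>)\<^sup>2)"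
    using insert(1,2) by (simp add: power2_sum algebra_simps)
  have i2: "integrable M (\<lambda>\<omega>. (W x \<omega>)\<^sup>2)" using insert.prems(2) by auto
  show ?case
    unfolding eq using insert(1,2) IH intp i2 prod0 intx by simp
qed


locale mlmc_loc = M: prob_space M + N: prob_space N
  for M :: "'a measure" and N :: "'b measure" +
  fixes Xl :: "nat \<Rightarrow> 'a \<Rightarrow> real" and Cost :: "nat \<Rightarrow> real"
    and Y :: "nat \<Rightarrow> nat \<Rightarrow> 'b \<Rightarrow> real" and alpha beta gamma calpha :: real
  assumes Xl_meas: "\<And>l. Xl l \<in> borel_measurable M"
    and Xl_L2: "\<And>l. integrable M (\<lambda>\<omega>. (Xl l \<omega>)\<^sup>2)"
    and indep: "prob_space.indep_vars N (\<lambda>_. borel) (\<lambda>(l, i). Y l i) UNIV"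
    and law: "\<And>l i. distr N borel (Y l i) = distr M borel (dlt Xl l)"
    and apos: "alpha > 0" and bpos: "beta > 0" and gpos: "gamma > 0" and cpos: "calpha > 0"
    and minle: "min beta gamma \<le> 2 * alpha"
    and costbd: "\<exists>c C'. 0 < c \<and> c < C' \<and>
                   (\<forall>l. c * exp (gamma * real l) < Cost l \<and> Cost l < C' * exp (gamma * real l))"
    and gb: "gamma \<ge> beta"
    and V0: "Vl M Xl 0 > 0"
    and B_eq: "beta = gamma \<Longrightarrow> filterlim (Ssum M Xl Cost) at_top sequentially"
    and B_gt: "gamma > beta \<Longrightarrow> beta < 2 * alpha \<and>
                 (\<exists>u. beta \<le> u \<and> u < 2 * alpha \<and>
                   liminf (\<lambda>k. ereal (Ssum M Xl Cost k * exp ((u - gamma) * real k / 2))) > 1)"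
    and lindeberg: "\<And>\<nu>. \<nu> > 0 \<Longrightarrow>
       (\<lambda>l. if Vl M Xl l > 0 then
              expct M (\<lambda>\<omega>. ((dlt Xl l \<omega> - expct M (dlt Xl l))\<^sup>2 / Vl M Xl l) *
                 indicator {\<omega>. (dlt Xl l \<omega> - expct M (dlt Xl l))\<^sup>2 / Vl M Xl l >
                     exp ((2 * alpha - gamma) * real l) * (Ssum M Xl Cost l)\<^sup>2 * \<nu>} \<omega>)
            else 0) \<longlonglongrightarrow> 0"
begin

abbreviation "V l \<equiv> Vl M Xl l"
abbreviation "S \<equiv> Ssum M Xl Cost"
abbreviation "mu l \<equiv> expct M (dlt Xl l)"
abbreviation "L eps \<equiv> Lev calpha alpha eps"
abbreviation "Ms eps l \<equiv> Msamp M Xl Cost calpha alpha eps l"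

definition g :: "nat \<Rightarrow> real \<Rightarrow> real" where
  "g l c = (if V l > 0 then
              expct M (\<lambda>\<omega>. ((dlt Xl l \<omega> - mu l)\<^sup>2 / V l) *
                 indicator {\<omega>. (dlt Xl l \<omega> - mu l)\<^sup>2 / V l > c} \<omega>) else 0)"

lemma dlt_meas[measurable]: "dlt Xl l \<in> borel_measurable M"
  unfolding dlt_def using Xl_meas by measurable

lemma Xl_meas'[measurable]: "Xl l \<in> borel_measurable M" by (rule Xl_meas)

lemma dlt_L2: "integrable M (\<lambda>\<omega>. (dlt Xl l \<omega>)\<^sup>2)"
proof -
  have b: "(a - b)\<^sup>2 \<le> 2 * a\<^sup>2 + 2 * b\<^sup>2" for a b :: real
    using zero_le_power2[of "a+b"] by (simp add: power2_eq_square algebra_simps)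
  show ?thesis
  proof (rule Bochner_Integration.integrable_bound)
    show "integrable M (\<lambda>\<omega>. 2 * (Xl l \<omega>)\<^sup>2 + 2 * (if l = 0 then 0 else Xl (l - 1) \<omega>)\<^sup>2)"
      using Xl_L2[of l] Xl_L2[of "l - 1"] by (cases "l = 0") auto
    show "AE x in M. norm ((dlt Xl l x)\<^sup>2) \<le> norm (2 * (Xl l x)\<^sup>2 + 2 * (if l = 0 then 0 else Xl (l - 1) x)\<^sup>2)"
      unfolding dlt_def using b by auto
  qed measurable
qed

lemma dlt_int: "integrable M (dlt Xl l)"
  by (rule M.square_integrable_imp_integrable[OF _ dlt_L2]) simp

lemma Xl_int: "integrable M (Xl l)"
  by (rule M.square_integrable_imp_integrable[OF _ Xl_L2]) simp

lemma V_eq: "V l = M.expectation (\<lambda>\<omega>. (dlt Xl l \<omega> - mu l)\<^sup>2)"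
  unfolding Vl_def var_def expct_def ..

lemma V_nn: "V l \<ge> 0" unfolding V_eq by simp

lemma centered_L2: "integrable M (\<lambda>\<omega>. (dlt Xl l \<omega> - mu l)\<^sup>2)"
  using dlt_L2[of l] dlt_int[of l] by (simp add: power2_diff)

lemma mu_sum: "(\<Sum>l\<le>n. mu l) = expct M (Xl n)"
proof (induction n)
  case 0 then show ?case by (simp add: expct_def dlt_def)
next
  case (Suc n)
  have "mu (Suc n) = expct M (Xl (Suc n)) - expct M (Xl n)"
    unfolding expct_def dlt_def using Xl_int[of "Suc n"] Xl_int[of n] by simp
  then show ?case using Suc by simp
qed

lemma Y_meas[measurable]: "Y l i \<in> borel_measurable N"
  using indep unfolding N.indep_vars_def2 by (auto dest: bspec[of _ _ "(l, i)"])

lemma Y_transfer: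
  fixes f :: "real \<Rightarrow> real"
  assumes [measurable]: "f \<in> borel_measurable borel"
  shows "N.expectation (\<lambda>\<omega>. f (Y l i \<omega>)) = M.expectation (\<lambda>\<omega>. f (dlt Xl l \<omega>))"
    and "integrable N (\<lambda>\<omega>. f (Y l i \<omega>)) \<longleftrightarrow> integrable M (\<lambda>\<omega>. f (dlt Xl l \<omega>))"
  using transfer_int[OF law, of l i f] by auto

definition J :: "real \<Rightarrow> (nat \<times> nat) set" where
  "J eps = Sigma {..L eps} (\<lambda>l. {1..Ms eps l})"
definition W :: "real \<Rightarrow> nat \<times> nat \<Rightarrow> 'b \<Rightarrow> real" where
  "W eps j \<omega> = (Y (fst j) (snd j) \<omega> - mu (fst j)) / real (Ms eps (fst j))"
definition sig2 :: "real \<Rightarrow> real" where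
  "sig2 eps = (\<Sum>l\<le>L eps. V l / real (Ms eps l))"

lemma Ms_ge1: "Ms eps l \<ge> 1"
  unfolding Msamp_def by simp

lemma finJ: "finite (J eps)" unfolding J_def by auto

lemma W_meas[measurable]: "W eps j \<in> borel_measurable N"
  unfolding W_def by measurable

lemma W_facts:
  shows "N.expectation (W eps j) = 0"
    and "integrable N (\<lambda>\<omega>. (W eps j \<omega>)\<^sup>2)"
    and "N.expectation (\<lambda>\<omega>. (W eps j \<omega>)\<^sup>2) = V (fst j) / (real (Ms eps (fst j)))\<^sup>2"
    and "integrable N (W eps j)"
proof -
  obtain l i where j: "j = (l, i)" by (cases j)
  define m where "m = real (Ms eps l)"
  have W_eq: "W eps j = (\<lambda>\<omega>. (\<lambda>y. (y - mu l) / m) (Y l i \<omega>))"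
    unfolding W_def j m_def by simp
  have W2_eq: "(\<lambda>\<omega>. (W eps j \<omega>)\<^sup>2) = (\<lambda>\<omega>. (\<lambda>y. ((y - mu l) / m)\<^sup>2) (Y l i \<omega>))"
    unfolding W_def j m_def by simp
  have i1: "integrable M (\<lambda>\<omega>. (dlt Xl l \<omega> - mu l) / m)" using dlt_int[of l] by simp
  have i2: "integrable M (\<lambda>\<omega>. ((dlt Xl l \<omega> - mu l) / m)\<^sup>2)"
    using centered_L2[of l] by (simp add: power_divide)
  show "integrable N (W eps j)" unfolding W_eq
    using Y_transfer(2)[of "\<lambda>y. (y - mu l) / m" l i] i1 by simp
  show "N.expectation (W eps j) = 0" unfolding W_eq
    using Y_transfer(1)[of "\<lambda>y. (y - mu l) / m" l i] dlt_int[of l] by (simp add: expct_def M.prob_space)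
  show "integrable N (\<lambda>\<omega>. (W eps j \<omega>)\<^sup>2)" unfolding W2_eq
    using Y_transfer(2)[of "\<lambda>y. ((y - mu l) / m)\<^sup>2" l i] i2 by simp
  show "N.expectation (\<lambda>\<omega>. (W eps j \<omega>)\<^sup>2) = V (fst j) / (real (Ms eps (fst j)))\<^sup>2" unfolding W2_eq
    using Y_transfer(1)[of "\<lambda>y. ((y - mu l) / m)\<^sup>2" l i] unfolding V_eq
    by (simp add: power_divide j m_def)
qed

lemma W_indep: "N.indep_vars (\<lambda>_. borel) (W eps) (J eps)"
proof -
  have "N.indep_vars (\<lambda>_. borel) (\<lambda>j x. (\<lambda>y. (y - mu (fst j)) / real (Ms eps (fst j))) ((\<lambda>(l, i). Y l i) j x)) UNIV"
    by (rule N.indep_vars_compose2[OF indep]) measurable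
  then have "N.indep_vars (\<lambda>_. borel) (W eps) UNIV"
    unfolding W_def by (simp add: case_prod_beta)
  then show ?thesis by (rule N.indep_vars_subset) simp
qed

lemma mlmc_eq:
  "mlmc M Xl Cost calpha alpha Y eps \<omega> - expct M (Xl (L eps)) = (\<Sum>j\<in>J eps. W eps j \<omega>)"
proof -
  have "(\<Sum>j\<in>J eps. W eps j \<omega>) = (\<Sum>l\<le>L eps. \<Sum>i\<in>{1..Ms eps l}. W eps (l, i) \<omega>)"
    unfolding J_def by (subst sum.Sigma) (auto simp: case_prod_beta)
  also have "\<dots> = (\<Sum>l\<le>L eps. (1 / real (Ms eps l)) * (\<Sum>i\<in>{1..Ms eps l}. Y l i \<omega>) - mu l)"
  proof (rule sum.cong[OF refl])
    fix l
    have m: "real (Ms eps l) > 0" using Ms_ge1[of eps l] by simp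
    have "(\<Sum>i\<in>{1..Ms eps l}. W eps (l, i) \<omega>) = (\<Sum>i\<in>{1..Ms eps l}. Y l i \<omega> - mu l) / real (Ms eps l)"
      unfolding W_def by (simp add: sum_divide_distrib)
    also have "\<dots> = ((\<Sum>i\<in>{1..Ms eps l}. Y l i \<omega>) - real (Ms eps l) * mu l) / real (Ms eps l)"
      by (simp add: sum_subtractf)
    also have "\<dots> = (1 / real (Ms eps l)) * (\<Sum>i\<in>{1..Ms eps l}. Y l i \<omega>) - mu l"
      using m by (simp add: field_simps)
    finally show "(\<Sum>i\<in>{1..Ms eps l}. W eps (l, i) \<omega>) = (1 / real (Ms eps l)) * (\<Sum>i\<in>{1..Ms eps l}. Y l i \<omega>) - mu l" .
  qed
  also have "\<dots> = mlmc M Xl Cost calpha alpha Y eps \<omega> - expct M (Xl (L eps))"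
    unfolding mlmc_def by (simp add: sum_subtractf mu_sum)
  finally show ?thesis ..
qed

lemma sum_EW2: "(\<Sum>j\<in>J eps. N.expectation (\<lambda>\<omega>. (W eps j \<omega>)\<^sup>2)) = sig2 eps"
proof -
  have "(\<Sum>j\<in>J eps. N.expectation (\<lambda>\<omega>. (W eps j \<omega>)\<^sup>2)) = (\<Sum>l\<le>L eps. \<Sum>i\<in>{1..Ms eps l}. V l / (real (Ms eps l))\<^sup>2)"
    unfolding J_def W_facts(3) by (subst sum.Sigma) (auto simp: case_prod_beta)
  also have "\<dots> = sig2 eps"
    unfolding sig2_def by (rule sum.cong[OF refl]) (simp add: power2_eq_square)
  finally show ?thesis .
qed

lemma var_mlmc: "var N (mlmc M Xl Cost calpha alpha Y eps) = sig2 eps"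
proof -
  define c where "c = expct M (Xl (L eps))"
  have f_eq: "mlmc M Xl Cost calpha alpha Y eps = (\<lambda>\<omega>. c + (\<Sum>j\<in>J eps. W eps j \<omega>))"
    using mlmc_eq[of eps] unfolding c_def by (auto simp: algebra_simps)
  have vs: "integrable N (\<lambda>\<omega>. (\<Sum>j\<in>J eps. W eps j \<omega>)\<^sup>2) \<and> integrable N (\<lambda>\<omega>. \<Sum>j\<in>J eps. W eps j \<omega>) \<and>
    N.expectation (\<lambda>\<omega>. (\<Sum>j\<in>J eps. W eps j \<omega>)\<^sup>2) = (\<Sum>j\<in>J eps. N.expectation (\<lambda>\<omega>. (W eps j \<omega>)\<^sup>2))"
    by (rule N.var_sum_indep[OF finJ W_indep W_facts(2) W_facts(1)])
  have E: "expct N (mlmc M Xl Cost calpha alpha Y eps) = c"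
    unfolding f_eq expct_def using vs W_facts(4)[of eps] W_facts(1)[of eps] by (simp add: N.prob_space)
  have "var N (mlmc M Xl Cost calpha alpha Y eps) = (\<Sum>j\<in>J eps. N.expectation (\<lambda>\<omega>. (W eps j \<omega>)\<^sup>2))"
    unfolding var_def E using vs by (simp add: f_eq)
  also have "\<dots> = sig2 eps" by (rule sum_EW2)
  finally show ?thesis .
qed

lemma sig2_pos: "sig2 eps > 0"
  unfolding sig2_def
  by (rule sum_pos2[where i=0]) (use V0 Ms_ge1[of eps 0] V_nn in \<open>auto intro: divide_nonneg_nonneg\<close>)

definition Lsum :: "real \<Rightarrow> real \<Rightarrow> real" where
  "Lsum eps \<delta> = (\<Sum>l\<le>L eps. (V l / (real (Ms eps l) * sig2 eps)) *
      g l ((real (Ms eps l))\<^sup>2 * sig2 eps * \<delta>\<^sup>2 / V l))"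

lemma lind_term:
  assumes dpos: "\<delta> > 0"
  shows "N.expectation (\<lambda>\<omega>. (W eps j \<omega> / sqrt (sig2 eps))\<^sup>2 *
            indicator {\<omega>. (W eps j \<omega> / sqrt (sig2 eps))\<^sup>2 > \<delta>\<^sup>2} \<omega>)
     \<le> (V (fst j) / ((real (Ms eps (fst j)))\<^sup>2 * sig2 eps)) *
         g (fst j) ((real (Ms eps (fst j)))\<^sup>2 * sig2 eps * \<delta>\<^sup>2 / V (fst j))"
proof -
  obtain l i where j: "j = (l, i)" by (cases j)
  define m where "m = real (Ms eps l)"
  define s where "s = sig2 eps"
  have m: "m > 0" using Ms_ge1[of eps l] unfolding m_def by simp
  have sp: "s > 0" using sig2_pos unfolding s_def by simp
  have sq: "(sqrt s)\<^sup>2 = s" using sp by simp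
  have Z2: "(W eps j \<omega> / sqrt (sig2 eps))\<^sup>2 = (Y l i \<omega> - mu l)\<^sup>2 / (m\<^sup>2 * s)" for \<omega>
    unfolding W_def j m_def s_def by (simp add: power_divide power_mult_distrib sig2_pos less_imp_le)
  show ?thesis
  proof (cases "V l > 0")
    case False
    then have V0': "V l = 0" using V_nn[of l] by simp
    have "N.expectation (\<lambda>\<omega>. (W eps j \<omega> / sqrt (sig2 eps))\<^sup>2 *
            indicator {\<omega>. (W eps j \<omega> / sqrt (sig2 eps))\<^sup>2 > \<delta>\<^sup>2} \<omega>)
        \<le> N.expectation (\<lambda>\<omega>. (W eps j \<omega>)\<^sup>2 / s)"
    proof (rule integral_mono')
      show "integrable N (\<lambda>\<omega>. (W eps j \<omega>)\<^sup>2 / s)" using W_facts(2)[of eps j] by simp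
      fix \<omega> show "0 \<le> (W eps j \<omega>)\<^sup>2 / s" using sp by simp
      show "(W eps j \<omega> / sqrt (sig2 eps))\<^sup>2 * indicator {\<omega>. (W eps j \<omega> / sqrt (sig2 eps))\<^sup>2 > \<delta>\<^sup>2} \<omega> \<le> (W eps j \<omega>)\<^sup>2 / s"
        using sp unfolding s_def by (simp add: indicator_def power_divide)
    qed
    also have "\<dots> = 0" using W_facts(3)[of eps j] V0' j by simp
    finally show ?thesis using V0' j by (simp add: g_def)
  next
    case True
    define q where "q = m\<^sup>2 * s / V l"
    have qp: "q > 0" unfolding q_def using True m sp by simp
    define h where "h y = (V l / (m\<^sup>2 * s)) * (if (y - mu l)\<^sup>2 / V l > q * \<delta>\<^sup>2 then (y - mu l)\<^sup>2 / V l else 0)" for y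
    have hm[measurable]: "h \<in> borel_measurable borel" unfolding h_def by measurable
    have pw: "(W eps j \<omega> / sqrt (sig2 eps))\<^sup>2 * indicator {\<omega>. (W eps j \<omega> / sqrt (sig2 eps))\<^sup>2 > \<delta>\<^sup>2} \<omega> = h (Y l i \<omega>)" for \<omega>
    proof -
      have c: "(\<delta>\<^sup>2 < (Y l i \<omega> - mu l)\<^sup>2 / (m\<^sup>2 * s)) = (q * \<delta>\<^sup>2 < (Y l i \<omega> - mu l)\<^sup>2 / V l)"
        unfolding q_def using True m sp by (simp add: field_simps)
      have e1: "(Y l i \<omega> - mu l)\<^sup>2 / (m\<^sup>2 * s) = (V l / (m\<^sup>2 * s)) * ((Y l i \<omega> - mu l)\<^sup>2 / V l)"
        using True by simp
      show ?thesis unfolding Z2 h_def indicator_def mem_Collect_eq c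
        by (cases "q * \<delta>\<^sup>2 < (Y l i \<omega> - mu l)\<^sup>2 / V l") (simp_all only: if_True if_False of_bool_eq mult_1_right mult_zero_right e1)
    qed
    have "N.expectation (\<lambda>\<omega>. (W eps j \<omega> / sqrt (sig2 eps))\<^sup>2 *
            indicator {\<omega>. (W eps j \<omega> / sqrt (sig2 eps))\<^sup>2 > \<delta>\<^sup>2} \<omega>) = N.expectation (\<lambda>\<omega>. h (Y l i \<omega>))"
      unfolding pw ..
    also have "\<dots> = M.expectation (\<lambda>\<omega>. h (dlt Xl l \<omega>))" by (rule Y_transfer(1)) simp
    also have "\<dots> = (V l / (m\<^sup>2 * s)) * g l (q * \<delta>\<^sup>2)"
    proof -
      have fe: "(\<lambda>\<omega>. h (dlt Xl l \<omega>)) = (\<lambda>\<omega>. (V l / (m\<^sup>2 * s)) * (((dlt Xl l \<omega> - mu l)\<^sup>2 / V l) *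
                 indicator {\<omega>. (dlt Xl l \<omega> - mu l)\<^sup>2 / V l > q * \<delta>\<^sup>2} \<omega>))"
        by (rule ext) (simp add: h_def indicator_def)
      show ?thesis unfolding fe integral_mult_right_zero g_def expct_def using True by simp
    qed
    finally show ?thesis unfolding q_def m_def s_def j by (simp add: mult.commute)
  qed
qed

lemma Lam_le:
  assumes dpos: "\<delta> > 0"
  shows "(\<Sum>j\<in>J eps. N.expectation (\<lambda>\<omega>. (W eps j \<omega> / sqrt (sig2 eps))\<^sup>2 *
            indicator {\<omega>. (W eps j \<omega> / sqrt (sig2 eps))\<^sup>2 > \<delta>\<^sup>2} \<omega>)) \<le> Lsum eps \<delta>"
proof -
  have "(\<Sum>j\<in>J eps. N.expectation (\<lambda>\<omega>. (W eps j \<omega> / sqrt (sig2 eps))\<^sup>2 *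
            indicator {\<omega>. (W eps j \<omega> / sqrt (sig2 eps))\<^sup>2 > \<delta>\<^sup>2} \<omega>))
     \<le> (\<Sum>j\<in>J eps. (V (fst j) / ((real (Ms eps (fst j)))\<^sup>2 * sig2 eps)) *
         g (fst j) ((real (Ms eps (fst j)))\<^sup>2 * sig2 eps * \<delta>\<^sup>2 / V (fst j)))"
    by (rule sum_mono) (rule lind_term[OF dpos])
  also have "\<dots> = (\<Sum>l\<le>L eps. \<Sum>i\<in>{1..Ms eps l}. (V l / ((real (Ms eps l))\<^sup>2 * sig2 eps)) *
         g l ((real (Ms eps l))\<^sup>2 * sig2 eps * \<delta>\<^sup>2 / V l))"
    unfolding J_def by (subst sum.Sigma) (auto simp: case_prod_beta)
  also have "\<dots> = Lsum eps \<delta>"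
    unfolding Lsum_def by (rule sum.cong[OF refl]) (simp add: power2_eq_square)
  finally show ?thesis .
qed

end


context mlmc_loc begin

definition Cp :: real where
  "Cp = (SOME C'. \<exists>c. 0 < c \<and> c < C' \<and> (\<forall>l. c * exp (gamma * real l) < Cost l \<and> Cost l < C' * exp (gamma * real l)))"

lemma Cp_prop: "\<exists>c. 0 < c \<and> c < Cp \<and> (\<forall>l. c * exp (gamma * real l) < Cost l \<and> Cost l < Cp * exp (gamma * real l))"
proof -
  have "\<exists>C' c. 0 < c \<and> c < C' \<and> (\<forall>l. c * exp (gamma * real l) < Cost l \<and> Cost l < C' * exp (gamma * real l))"
    using costbd by blast
  from someI_ex[OF this] show ?thesis unfolding Cp_def .
qed

lemma Cost_pos: "Cost l > 0"
proof -
  from Cp_prop obtain c where "0 < c" "\<forall>l. c * exp (gamma * real l) < Cost l" by blast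
  then show ?thesis by (metis exp_gt_zero mult_pos_pos order.strict_trans)
qed

lemma Cost_le: "Cost l \<le> Cp * exp (gamma * real l)"
  using Cp_prop by (meson less_imp_le)

lemma Cp_pos: "Cp > 0"
  using Cp_prop by auto

lemma S_term_nn: "sqrt (V l * Cost l) \<ge> 0"
  using V_nn Cost_pos by (simp add: less_imp_le)

lemma S_mono: "k \<le> k' \<Longrightarrow> S k \<le> S k'"
  unfolding Ssum_def by (rule sum_mono2) (auto intro!: mult_nonneg_nonneg simp: V_nn Cost_pos less_imp_le)

lemma S0_pos: "S 0 > 0"
  unfolding Ssum_def using V0 Cost_pos[of 0] by simp

lemma S_pos: "S k > 0"
  using S_mono[of 0 k] S0_pos by simp

lemma key: "(\<lambda>k. exp ((gamma - 2 * alpha) * real k) / (S k)\<^sup>2) \<longlonglongrightarrow> 0"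
proof (cases "gamma = beta")
  case True
  then have ga: "gamma \<le> 2 * alpha" using minle by simp
  have "filterlim S at_top sequentially" using B_eq True by simp
  then have "filterlim (\<lambda>k. (S k)^2) at_top sequentially" by (rule filterlim_pow_at_top[of 2, simplified])
  then have i0: "(\<lambda>k. inverse ((S k)^2)) \<longlonglongrightarrow> 0" by (rule tendsto_inverse_0_at_top)
  show ?thesis
  proof (rule real_tendsto_sandwich[OF _ _ tendsto_const i0])
    show "\<forall>\<^sub>F n in sequentially. 0 \<le> exp ((gamma - 2 * alpha) * real n) / (S n)\<^sup>2" by simp
    show "\<forall>\<^sub>F n in sequentially. exp ((gamma - 2 * alpha) * real n) / (S n)\<^sup>2 \<le> inverse ((S n)\<^sup>2)"
    proof (intro always_eventually allI)
      fix n
      have "exp ((gamma - 2 * alpha) * real n) \<le> 1" using ga by (simp add: mult_nonpos_nonneg)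
      then show "exp ((gamma - 2 * alpha) * real n) / (S n)\<^sup>2 \<le> inverse ((S n)\<^sup>2)"
        using S_pos[of n] by (simp add: divide_inverse mult_left_le_one_le)
    qed
  qed
next
  case False
  then have gt: "gamma > beta" using gb by simp
  from B_gt[OF gt] obtain u where u: "u < 2 * alpha"
    and li: "liminf (\<lambda>k. ereal (S k * exp ((u - gamma) * real k / 2))) > 1" by blast
  have ev: "eventually (\<lambda>k. ereal (S k * exp ((u - gamma) * real k / 2)) > 1) sequentially"
    by (rule less_LiminfD[OF li])
  have lim0: "(\<lambda>k. exp ((u - 2 * alpha) * real k)) \<longlonglongrightarrow> 0"
  proof -
    have "(\<lambda>k. exp (u - 2 * alpha) ^ k) \<longlonglongrightarrow> 0"
      by (rule LIMSEQ_power_zero) (use u in simp)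
    then show ?thesis by (simp add: exp_of_nat_mult[symmetric] mult.commute)
  qed
  show ?thesis
  proof (rule real_tendsto_sandwich[OF _ _ tendsto_const lim0])
    show "\<forall>\<^sub>F n in sequentially. 0 \<le> exp ((gamma - 2 * alpha) * real n) / (S n)\<^sup>2" by simp
    show "\<forall>\<^sub>F n in sequentially. exp ((gamma - 2 * alpha) * real n) / (S n)\<^sup>2 \<le> exp ((u - 2 * alpha) * real n)"
      using ev
    proof (rule eventually_mono)
      fix k assume "ereal (S k * exp ((u - gamma) * real k / 2)) > 1"
      then have h: "S k * exp ((u - gamma) * real k / 2) > 1" by simp
      have "1 < (S k * exp ((u - gamma) * real k / 2))\<^sup>2"
        using h by (smt (verit) one_less_power pos2)
      also have "\<dots> = (S k)\<^sup>2 * exp ((u - gamma) * real k)"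
        by (simp add: power_mult_distrib exp_double[symmetric] power2_eq_square exp_add[symmetric])
      finally have h2: "1 < (S k)\<^sup>2 * exp ((u - gamma) * real k)" .
      have "exp ((gamma - 2 * alpha) * real k) / (S k)\<^sup>2 \<le> exp ((gamma - 2 * alpha) * real k) * exp ((u - gamma) * real k)"
        using h2 S_pos[of k] by (simp add: divide_le_eq mult.commute mult.left_commute less_imp_le)
      also have "\<dots> = exp ((u - 2 * alpha) * real k)" by (simp add: exp_add[symmetric] algebra_simps)
      finally show "exp ((gamma - 2 * alpha) * real k) / (S k)\<^sup>2 \<le> exp ((u - 2 * alpha) * real k)" .
    qed
  qed
qed

definition Aa :: real where "Aa = exp alpha * calpha"

lemma Aa_pos: "Aa > 0" unfolding Aa_def using cpos by simp

lemma ev_r: "eventually (\<lambda>eps. 0 < eps \<and> ln (calpha / eps) / alpha \<ge> Z) (at_right 0)"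
proof -
  have b: "0 < calpha * exp (- alpha * Z)" using cpos by simp
  show ?thesis using eventually_at_right_real[OF b]
  proof (rule eventually_mono)
    fix eps assume "eps \<in> {0<..<calpha * exp (- alpha * Z)}"
    then have e: "0 < eps" "eps < calpha * exp (- alpha * Z)" by auto
    then have "exp (alpha * Z) < calpha / eps"
      by (simp add: field_simps exp_minus)
    then have "alpha * Z < ln (calpha / eps)"
      using e cpos by (metis divide_pos_pos exp_less_cancel_iff exp_ln)
    then show "0 < eps \<and> ln (calpha / eps) / alpha \<ge> Z" using e apos by (simp add: field_simps)
  qed
qed

lemma L_ge: "real (L eps) \<ge> ln (calpha / eps) / alpha"
proof -
  have "real (L eps) = real_of_int (max \<lceil>ln (calpha / eps) / alpha\<rceil> 1)"
    unfolding Lev_def by simp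
  also have "\<dots> \<ge> ln (calpha / eps) / alpha" by linarith
  finally show ?thesis .
qed

lemma L_le: "ln (calpha / eps) / alpha \<ge> 1 \<Longrightarrow> real (L eps) < ln (calpha / eps) / alpha + 1"
proof -
  assume a: "ln (calpha / eps) / alpha \<ge> 1"
  have "real (L eps) = real_of_int (max \<lceil>ln (calpha / eps) / alpha\<rceil> 1)"
    unfolding Lev_def by simp
  also have "\<dots> < ln (calpha / eps) / alpha + 1" using a by linarith
  finally show ?thesis .
qed

lemma L_top: "filterlim L at_top (at_right 0)"
  unfolding filterlim_at_top
proof
  fix Z :: nat
  show "eventually (\<lambda>eps. Z \<le> L eps) (at_right 0)"
    using ev_r[of "real Z"]
  proof (rule eventually_mono)
    fix x assume "0 < x \<and> real Z \<le> ln (calpha / x) / alpha"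
    then have "real Z \<le> real (L x)" using L_ge[of x] by linarith
    then show "Z \<le> L x" by simp
  qed
qed

lemma L_bound:
  assumes "0 < eps" "ln (calpha / eps) / alpha \<ge> 1"
  shows "eps * exp (alpha * real (L eps)) \<le> Aa"
proof -
  have "alpha * real (L eps) \<le> ln (calpha / eps) + alpha"
    using L_le[OF assms(2)] apos by (simp add: field_simps)
  then have "exp (alpha * real (L eps)) \<le> exp (ln (calpha / eps) + alpha)" by simp
  also have "\<dots> = calpha / eps * exp alpha" using assms cpos by (simp add: exp_add)
  finally show ?thesis using assms(1) unfolding Aa_def by (simp add: field_simps)
qed

end


lemma aux_ineq:
  fixes b C SL e :: real
  assumes "b \<ge> 0" "C > 0" "SL > 0" "e > 0"
  shows "(b\<^sup>2 / C) / ((1 / e) * (b / C) * SL + 1) \<ge> e * (b / SL - e * C / SL\<^sup>2)"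
proof -
  have d: "b * SL + e * C > 0" using assms by (simp add: add_nonneg_pos)
  have lhs: "(b\<^sup>2 / C) / ((1 / e) * (b / C) * SL + 1) = e * b\<^sup>2 / (b * SL + e * C)"
    using assms by (simp add: field_simps power2_eq_square)
  have rhs: "e * (b / SL - e * C / SL\<^sup>2) = e * (b * SL - e * C) / SL\<^sup>2"
    using assms by (simp add: field_simps power2_eq_square)
  have key: "(b * SL - e * C) * (b * SL + e * C) \<le> b\<^sup>2 * SL\<^sup>2"
  proof -
    have "(b * SL - e * C) * (b * SL + e * C) = b\<^sup>2 * SL\<^sup>2 - (e * C)\<^sup>2"
      by (simp add: power2_eq_square algebra_simps)
    then show ?thesis by simp
  qed
  have "e * (b * SL - e * C) / SL\<^sup>2 \<le> e * b\<^sup>2 / (b * SL + e * C)"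
  proof -
    have "(b * SL - e * C) / SL\<^sup>2 \<le> b\<^sup>2 / (b * SL + e * C)"
      using key d assms(3) by (simp add: divide_le_eq le_divide_eq mult.commute mult.left_commute)
    then show ?thesis using assms(4)
      by (metis (no_types, lifting) mult_left_mono less_imp_le times_divide_eq_right)
  qed
  then show ?thesis using lhs rhs by simp
qed

context mlmc_loc begin

lemma Ms_bounds:
  fixes eps :: real and l :: nat
  defines "a \<equiv> (1 / eps\<^sup>2) * sqrt (V l / Cost l) * S (L eps)"
  shows "real (Ms eps l) \<ge> a" "real (Ms eps l) \<le> a + 1"
proof -
  have a0: "a \<ge> 0" unfolding a_def using S_pos[of "L eps"] V_nn[of l] Cost_pos[of l] by simp
  have "real (Ms eps l) = real_of_int (max \<lceil>a\<rceil> 1)"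
    unfolding Msamp_def a_def by simp
  moreover have "real_of_int (max \<lceil>a\<rceil> 1) \<ge> a" by linarith
  moreover have "real_of_int (max \<lceil>a\<rceil> 1) \<le> a + 1" using a0 by linarith
  ultimately show "real (Ms eps l) \<ge> a" "real (Ms eps l) \<le> a + 1" by auto
qed

lemma term_lower:
  assumes "eps > 0"
  shows "V l / real (Ms eps l) \<ge> eps\<^sup>2 * (sqrt (V l * Cost l) / S (L eps) - eps\<^sup>2 * Cost l / (S (L eps))\<^sup>2)"
proof -
  define b where "b = sqrt (V l * Cost l)"
  define C where "C = Cost l"
  define SL where "SL = S (L eps)"
  have C: "C > 0" unfolding C_def by (rule Cost_pos)
  have SL: "SL > 0" unfolding SL_def by (rule S_pos)
  have b0: "b \<ge> 0" unfolding b_def by (rule S_term_nn)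
  have Vb: "V l = b\<^sup>2 / C" unfolding b_def C_def using V_nn[of l] Cost_pos[of l] by simp
  have sq: "sqrt (V l / Cost l) = b / C"
  proof -
    have "V l / Cost l = (b / C)\<^sup>2" using Vb C by (simp add: C_def power_divide power2_eq_square)
    then show ?thesis using b0 C by simp
  qed
  have "V l / real (Ms eps l) \<ge> V l / ((1 / eps\<^sup>2) * sqrt (V l / Cost l) * S (L eps) + 1)"
  proof (rule divide_left_mono)
    show "real (Ms eps l) \<le> 1 / eps\<^sup>2 * sqrt (V l / Cost l) * S (L eps) + 1" by (rule Ms_bounds(2))
    show "0 \<le> V l" by (rule V_nn)
    show "0 < (1 / eps\<^sup>2 * sqrt (V l / Cost l) * S (L eps) + 1) * real (Ms eps l)"
    proof -
      have "0 \<le> 1 / eps\<^sup>2 * sqrt (V l / Cost l) * S (L eps)"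
        using S_pos[of "L eps"] V_nn[of l] Cost_pos[of l] by simp
      then show ?thesis using Ms_ge1[of eps l] by (intro mult_pos_pos) auto
    qed
  qed
  also have "V l / ((1 / eps\<^sup>2) * sqrt (V l / Cost l) * S (L eps) + 1) = (b\<^sup>2 / C) / ((1 / eps\<^sup>2) * (b / C) * SL + 1)"
    unfolding sq SL_def by (subst (1) Vb) (rule refl)
  finally have "V l / real (Ms eps l) \<ge> (b\<^sup>2 / C) / ((1 / eps\<^sup>2) * (b / C) * SL + 1)" .
  moreover have "(b\<^sup>2 / C) / ((1 / eps\<^sup>2) * (b / C) * SL + 1) \<ge> eps\<^sup>2 * (b / SL - eps\<^sup>2 * C / SL\<^sup>2)"
    by (rule aux_ineq) (use b0 C SL assms in auto)
  ultimately show ?thesis unfolding b_def C_def SL_def by linarith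
qed

lemma sig2_lower:
  assumes "eps > 0"
  shows "sig2 eps \<ge> eps\<^sup>2 * (1 - eps\<^sup>2 * (\<Sum>l\<le>L eps. Cost l) / (S (L eps))\<^sup>2)"
proof -
  have "sig2 eps \<ge> (\<Sum>l\<le>L eps. eps\<^sup>2 * (sqrt (V l * Cost l) / S (L eps) - eps\<^sup>2 * Cost l / (S (L eps))\<^sup>2))"
    unfolding sig2_def by (rule sum_mono) (rule term_lower[OF assms])
  also have "(\<Sum>l\<le>L eps. eps\<^sup>2 * (sqrt (V l * Cost l) / S (L eps) - eps\<^sup>2 * Cost l / (S (L eps))\<^sup>2))
      = eps\<^sup>2 * (S (L eps) / S (L eps) - eps\<^sup>2 * (\<Sum>l\<le>L eps. Cost l) / (S (L eps))\<^sup>2)"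
    unfolding Ssum_def sum_distrib_left[symmetric] sum_subtractf sum_divide_distrib[symmetric]
    by (simp only: sum_distrib_left[symmetric, of "eps\<^sup>2"] times_divide_eq_right)
  also have "S (L eps) / S (L eps) = 1" using S_pos[of "L eps"] by simp
  finally show ?thesis .
qed

definition Dc :: real where "Dc = Cp * exp gamma / (exp gamma - 1)"

lemma Dc_pos: "Dc > 0" unfolding Dc_def using Cp_pos gpos by simp

lemma Cost_sum: "(\<Sum>l\<le>n. Cost l) \<le> Dc * exp (gamma * real n)"
proof -
  have eg: "exp gamma > 1" using gpos by simp
  have "(\<Sum>l\<le>n. Cost l) \<le> (\<Sum>l\<le>n. Cp * exp gamma ^ l)"
    by (rule sum_mono) (use Cost_le in \<open>simp add: exp_of_nat_mult[symmetric] mult.commute\<close>)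
  also have "\<dots> = Cp * (\<Sum>l<Suc n. exp gamma ^ l)"
    by (simp add: sum_distrib_left lessThan_Suc_atMost)
  also have "(\<Sum>l<Suc n. exp gamma ^ l) = (exp gamma ^ Suc n - 1) / (exp gamma - 1)"
    using eg by (simp add: sum_gp_strict field_simps)
  also have "\<dots> \<le> exp gamma ^ Suc n / (exp gamma - 1)"
    using eg by (simp add: divide_right_mono)
  also have "exp gamma ^ Suc n = exp gamma * exp (gamma * real n)"
    by (simp add: exp_of_nat_mult[symmetric] mult.commute)
  finally show ?thesis unfolding Dc_def using Cp_pos eg by (simp add: mult_left_mono field_simps)
qed

definition kap :: real where "kap = 1 / (2 * Aa\<^sup>2 * Cp)"

lemma kap_pos: "kap > 0" unfolding kap_def using Aa_pos Cp_pos by simp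

definition good :: "real \<Rightarrow> bool" where
  "good eps \<longleftrightarrow> 0 < eps \<and> ln (calpha / eps) / alpha \<ge> 1 \<and> sig2 eps \<ge> eps\<^sup>2 / 2"

lemma eps2_bound:
  assumes "0 < eps" "ln (calpha / eps) / alpha \<ge> 1"
  shows "eps\<^sup>2 * exp (2 * alpha * real (L eps)) \<le> Aa\<^sup>2"
proof -
  have "(eps * exp (alpha * real (L eps)))\<^sup>2 \<le> Aa\<^sup>2"
    using L_bound[OF assms] assms(1) by (intro power_mono) auto
  moreover have "(eps * exp (alpha * real (L eps)))\<^sup>2 = eps\<^sup>2 * exp (2 * alpha * real (L eps))"
    by (simp add: power_mult_distrib exp_double[symmetric] mult.assoc)
  ultimately show ?thesis by simp
qed

lemma ev_good: "eventually good (at_right 0)"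
proof -
  have lim: "((\<lambda>eps. exp ((gamma - 2 * alpha) * real (L eps)) / (S (L eps))\<^sup>2) \<longlongrightarrow> 0) (at_right 0)"
    by (rule filterlim_compose[OF key L_top])
  have c: "0 < 1 / (2 * Aa\<^sup>2 * Dc)" using Aa_pos Dc_pos by simp
  have ev1: "eventually (\<lambda>eps. exp ((gamma - 2 * alpha) * real (L eps)) / (S (L eps))\<^sup>2 < 1 / (2 * Aa\<^sup>2 * Dc)) (at_right 0)"
    using order_tendstoD(2)[OF lim c] by simp
  show ?thesis using eventually_conj[OF ev1 ev_r[of 1]] unfolding good_def
  proof (rule eventually_mono)
    fix eps assume a: "exp ((gamma - 2 * alpha) * real (L eps)) / (S (L eps))\<^sup>2 < 1 / (2 * Aa\<^sup>2 * Dc) \<and>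
      0 < eps \<and> 1 \<le> ln (calpha / eps) / alpha"
    define SL where "SL = S (L eps)"
    define n where "n = real (L eps)"
    have SL: "SL > 0" unfolding SL_def by (rule S_pos)
    have e: "eps\<^sup>2 * exp (2 * alpha * n) \<le> Aa\<^sup>2" unfolding n_def using eps2_bound a by simp
    have cs: "(\<Sum>l\<le>L eps. Cost l) \<le> Dc * exp (gamma * n)" unfolding n_def by (rule Cost_sum)
    have "eps\<^sup>2 * (\<Sum>l\<le>L eps. Cost l) / SL\<^sup>2 \<le> eps\<^sup>2 * (Dc * exp (gamma * n)) / SL\<^sup>2"
      using cs SL by (intro divide_right_mono mult_left_mono) auto
    also have "eps\<^sup>2 * (Dc * exp (gamma * n)) = Dc * (eps\<^sup>2 * exp (2 * alpha * n)) * exp ((gamma - 2 * alpha) * n)"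
      by (simp add: exp_add[symmetric] algebra_simps)
    also have "\<dots> \<le> Dc * Aa\<^sup>2 * exp ((gamma - 2 * alpha) * n)"
      using e Dc_pos by (intro mult_right_mono mult_left_mono) auto
    also have "Dc * Aa\<^sup>2 * exp ((gamma - 2 * alpha) * n) / SL\<^sup>2 = Dc * Aa\<^sup>2 * (exp ((gamma - 2 * alpha) * n) / SL\<^sup>2)"
      by simp
    also have "\<dots> \<le> Dc * Aa\<^sup>2 * (1 / (2 * Aa\<^sup>2 * Dc))"
      using a Dc_pos Aa_pos unfolding n_def SL_def by (intro mult_left_mono) auto
    also have "\<dots> = 1 / 2" using Dc_pos Aa_pos by simp
    finally have h: "eps\<^sup>2 * (\<Sum>l\<le>L eps. Cost l) / SL\<^sup>2 \<le> 1 / 2"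
      using SL by (simp add: divide_right_mono)
    have "sig2 eps \<ge> eps\<^sup>2 * (1 - eps\<^sup>2 * (\<Sum>l\<le>L eps. Cost l) / SL\<^sup>2)"
      unfolding SL_def by (rule sig2_lower) (use a in simp)
    moreover have "eps\<^sup>2 * (1 - eps\<^sup>2 * (\<Sum>l\<le>L eps. Cost l) / SL\<^sup>2) \<ge> eps\<^sup>2 / 2"
    proof -
      have "eps\<^sup>2 * (1 / 2) \<le> eps\<^sup>2 * (1 - eps\<^sup>2 * (\<Sum>l\<le>L eps. Cost l) / SL\<^sup>2)"
        using h by (intro mult_left_mono) auto
      then show ?thesis by simp
    qed
    ultimately show "0 < eps \<and> 1 \<le> ln (calpha / eps) / alpha \<and> eps\<^sup>2 / 2 \<le> sig2 eps" using a by linarith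
  qed
qed

lemma T_bound:
  assumes g: "good eps" and Vp: "V l > 0"
  shows "(real (Ms eps l))\<^sup>2 * sig2 eps / V l \<ge> kap * exp (2 * alpha * real (L eps) - gamma * real l) * (S (L eps))\<^sup>2"
proof -
  have e0: "eps > 0" and lg: "ln (calpha / eps) / alpha \<ge> 1" and sg: "sig2 eps \<ge> eps\<^sup>2 / 2"
    using g unfolding good_def by auto
  define a where "a = (1 / eps\<^sup>2) * sqrt (V l / Cost l) * S (L eps)"
  define SL where "SL = S (L eps)"
  define C where "C = Cost l"
  have C: "C > 0" unfolding C_def by (rule Cost_pos)
  have SL: "SL > 0" unfolding SL_def by (rule S_pos)
  have a0: "a \<ge> 0" unfolding a_def using S_pos[of "L eps"] V_nn[of l] Cost_pos[of l] by simp
  have aM: "a \<le> real (Ms eps l)" unfolding a_def by (rule Ms_bounds(1))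
  have a2: "a\<^sup>2 = (V l / C) * SL\<^sup>2 / (eps\<^sup>2)\<^sup>2"
    unfolding a_def SL_def C_def using V_nn[of l] Cost_pos[of l]
    by (simp add: power_mult_distrib power_divide)
  have "(real (Ms eps l))\<^sup>2 * sig2 eps / V l \<ge> a\<^sup>2 * (eps\<^sup>2 / 2) / V l"
    using aM a0 sg Vp by (intro divide_right_mono mult_mono power_mono) auto
  moreover have "a\<^sup>2 * (eps\<^sup>2 / 2) / V l = SL\<^sup>2 / (2 * eps\<^sup>2 * C)"
    unfolding a2 using Vp C e0 by (simp add: field_simps power2_eq_square)
  moreover have "SL\<^sup>2 / (2 * eps\<^sup>2 * C) \<ge> kap * exp (2 * alpha * real (L eps) - gamma * real l) * SL\<^sup>2"
  proof -
    have e: "eps\<^sup>2 * exp (2 * alpha * real (L eps)) \<le> Aa\<^sup>2" by (rule eps2_bound[OF e0 lg])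
    have cl: "C \<le> Cp * exp (gamma * real l)" unfolding C_def by (rule Cost_le)
    have "2 * eps\<^sup>2 * C * (kap * exp (2 * alpha * real (L eps) - gamma * real l))
          = (eps\<^sup>2 * exp (2 * alpha * real (L eps))) * (C / (Cp * exp (gamma * real l))) / Aa\<^sup>2"
      unfolding kap_def using Cp_pos Aa_pos by (simp add: exp_diff field_simps power2_eq_square)
    also have "\<dots> \<le> Aa\<^sup>2 * 1 / Aa\<^sup>2"
      using e cl C Cp_pos by (intro divide_right_mono mult_mono) (auto simp: divide_le_eq)
    also have "\<dots> = 1" using Aa_pos by simp
    finally have h: "2 * eps\<^sup>2 * C * (kap * exp (2 * alpha * real (L eps) - gamma * real l)) \<le> 1" .
    have pos: "2 * eps\<^sup>2 * C > 0" using e0 C by simp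
    have "kap * exp (2 * alpha * real (L eps) - gamma * real l) \<le> 1 / (2 * eps\<^sup>2 * C)"
      using h pos by (simp add: le_divide_eq mult.commute)
    then have "kap * exp (2 * alpha * real (L eps) - gamma * real l) * SL\<^sup>2 \<le> 1 / (2 * eps\<^sup>2 * C) * SL\<^sup>2"
      by (rule mult_right_mono) simp
    then show ?thesis by simp
  qed
  ultimately show ?thesis unfolding SL_def by linarith
qed

end


context mlmc_loc begin

definition fg :: "nat \<Rightarrow> real \<Rightarrow> 'a \<Rightarrow> real" where
  "fg l c \<omega> = (if (dlt Xl l \<omega> - mu l)\<^sup>2 / V l > c then (dlt Xl l \<omega> - mu l)\<^sup>2 / V l else 0)"

lemma fg_meas[measurable]: "fg l c \<in> borel_measurable M"
  unfolding fg_def by measurable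

lemma fg_int: "integrable M (fg l c)"
proof (rule Bochner_Integration.integrable_bound)
  show "integrable M (\<lambda>\<omega>. (dlt Xl l \<omega> - mu l)\<^sup>2 / V l)" using centered_L2[of l] by simp
  show "AE x in M. norm (fg l c x) \<le> norm ((dlt Xl l x - mu l)\<^sup>2 / V l)"
    unfolding fg_def using V_nn[of l] by auto
qed simp

lemma g_alt: "V l > 0 \<Longrightarrow> g l c = M.expectation (fg l c)"
proof -
  assume T: "V l > 0"
  have e: "(\<lambda>\<omega>. ((dlt Xl l \<omega> - mu l)\<^sup>2 / V l) * indicator {\<omega>. (dlt Xl l \<omega> - mu l)\<^sup>2 / V l > c} \<omega>) = fg l c"
    by (rule ext) (simp add: fg_def indicator_def)
  show ?thesis unfolding g_def expct_def if_P[OF T]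
    by (rule Bochner_Integration.integral_cong[OF refl]) (simp add: fg_def indicator_def expct_def)
qed

lemma g_nn: "g l c \<ge> 0"
proof (cases "V l > 0")
  case True
  show ?thesis unfolding g_alt[OF True]
    by (rule Bochner_Integration.integral_nonneg) (use V_nn[of l] in \<open>auto simp: fg_def\<close>)
qed (simp add: g_def)

lemma g_anti: "c \<le> c' \<Longrightarrow> g l c' \<le> g l c"
proof (cases "V l > 0")
  case True
  assume cc: "c \<le> c'"
  show ?thesis unfolding g_alt[OF True]
    by (rule integral_mono[OF fg_int fg_int]) (use cc V_nn[of l] in \<open>auto simp: fg_def\<close>)
qed (simp add: g_def)

lemma g_small: "\<eta> > 0 \<Longrightarrow> \<exists>c. g l c < \<eta>"
proof (cases "V l > 0")
  case True
  assume eta: "\<eta> > 0"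
  have lim: "(\<lambda>n. M.expectation (fg l (real n))) \<longlonglongrightarrow> M.expectation (\<lambda>\<omega>. 0)"
  proof (rule integral_dominated_convergence[where w="\<lambda>\<omega>. (dlt Xl l \<omega> - mu l)\<^sup>2 / V l"])
    show "integrable M (\<lambda>\<omega>. (dlt Xl l \<omega> - mu l)\<^sup>2 / V l)" using centered_L2[of l] by simp
    show "AE x in M. (\<lambda>n. fg l (real n) x) \<longlonglongrightarrow> 0"
    proof (rule AE_I2)
      fix x
      have "eventually (\<lambda>n. fg l (real n) x = 0) sequentially"
        using eventually_ge_at_top[of "nat \<lceil>(dlt Xl l x - mu l)\<^sup>2 / V l\<rceil>"]
      proof (rule eventually_mono)
        fix n assume "nat \<lceil>(dlt Xl l x - mu l)\<^sup>2 / V l\<rceil> \<le> n"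
        then have "(dlt Xl l x - mu l)\<^sup>2 / V l \<le> real n" by linarith
        then show "fg l (real n) x = 0" unfolding fg_def by simp
      qed
      then show "(\<lambda>n. fg l (real n) x) \<longlonglongrightarrow> 0" by (rule tendsto_eventually)
    qed
    show "\<And>n. AE x in M. norm (fg l (real n) x) \<le> (dlt Xl l x - mu l)\<^sup>2 / V l"
      unfolding fg_def using V_nn[of l] by auto
  qed auto
  then have "(\<lambda>n. g l (real n)) \<longlonglongrightarrow> 0" using g_alt[OF True] by simp
  from order_tendstoD(2)[OF this eta] obtain n where "g l (real n) < \<eta>"
    by (auto simp: eventually_sequentially)
  then show ?thesis by blast
qed (simp add: g_def)

lemma w_sum: "(\<Sum>l\<le>L eps. V l / (real (Ms eps l) * sig2 eps)) = 1"
proof -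
  have "(\<Sum>l\<le>L eps. V l / (real (Ms eps l) * sig2 eps)) = (\<Sum>l\<le>L eps. V l / real (Ms eps l)) / sig2 eps"
    by (simp add: sum_divide_distrib divide_divide_eq_left)
  also have "\<dots> = sig2 eps / sig2 eps" unfolding sig2_def ..
  finally have "(\<Sum>l\<le>L eps. V l / (real (Ms eps l) * sig2 eps)) = sig2 eps / sig2 eps" .
  then show ?thesis using sig2_pos[of eps] by simp
qed

lemma w_nn: "V l / (real (Ms eps l) * sig2 eps) \<ge> 0"
  using V_nn[of l] sig2_pos[of eps] by simp

lemma Lsum_nn: "Lsum eps \<delta> \<ge> 0"
  unfolding Lsum_def by (intro sum_nonneg mult_nonneg_nonneg w_nn g_nn)

lemma Lsum_lim:
  assumes dpos: "\<delta> > 0"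
  shows "((\<lambda>eps. Lsum eps \<delta>) \<longlongrightarrow> 0) (at_right 0)"
proof (rule tendstoI)
  fix \<eta> :: real assume eta: "\<eta> > 0"
  define nu where "nu = kap * \<delta>\<^sup>2"
  have nu: "nu > 0" unfolding nu_def using kap_pos dpos by simp
  have "(\<lambda>l. g l (exp ((2 * alpha - gamma) * real l) * (S l)\<^sup>2 * nu)) \<longlonglongrightarrow> 0"
    using lindeberg[OF nu] unfolding g_def .
  from order_tendstoD(2)[OF this, of "\<eta> / 2"] eta obtain N0 where
    N0: "\<And>l. l \<ge> N0 \<Longrightarrow> g l (exp ((2 * alpha - gamma) * real l) * (S l)\<^sup>2 * nu) < \<eta> / 2"
    by (auto simp: eventually_sequentially)
  have "\<forall>l. \<exists>c. g l c < \<eta> / 2"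
  proof
    fix l show "\<exists>c. g l c < \<eta> / 2" by (rule g_small) (use eta in simp)
  qed
  then obtain cf where cf: "\<And>l. g l (cf l) < \<eta> / 2" by metis
  define cs where "cs = (\<Sum>l<N0. \<bar>cf l\<bar>)"
  have cs: "g l cs < \<eta> / 2" if "l < N0" for l
  proof -
    have "cf l \<le> cs" unfolding cs_def
      using member_le_sum[of l "{..<N0}" "\<lambda>l. \<bar>cf l\<bar>"] that by fastforce
    then show ?thesis using g_anti[of "cf l" cs l] cf[of l] by simp
  qed
  define K where "K = kap * \<delta>\<^sup>2 * exp (- gamma * real N0) * (S 0)\<^sup>2"
  have K: "K > 0" unfolding K_def using kap_pos dpos S0_pos by simp
  have "filterlim (\<lambda>n::nat. exp (2 * alpha * real n)) at_top sequentially"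
    by (rule filterlim_compose[OF exp_at_top])
       (rule filterlim_tendsto_pos_mult_at_top[OF tendsto_const _ filterlim_real_sequentially], use apos in simp)
  then have "filterlim (\<lambda>n::nat. K * exp (2 * alpha * real n)) at_top sequentially"
    by (rule filterlim_tendsto_pos_mult_at_top[OF tendsto_const K])
  then have "filterlim (\<lambda>eps. K * exp (2 * alpha * real (L eps))) at_top (at_right 0)"
    by (rule filterlim_compose[OF _ L_top])
  then have evK: "eventually (\<lambda>eps. K * exp (2 * alpha * real (L eps)) \<ge> cs) (at_right 0)"
    by (simp add: filterlim_at_top)
  have evN: "eventually (\<lambda>eps. L eps \<ge> N0) (at_right 0)"
    using L_top by (simp add: filterlim_at_top)
  show "eventually (\<lambda>eps. dist (Lsum eps \<delta>) 0 < \<eta>) (at_right 0)"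
    using eventually_conj[OF ev_good eventually_conj[OF evK evN]]
  proof (rule eventually_mono)
    fix eps assume a: "good eps \<and> K * exp (2 * alpha * real (L eps)) \<ge> cs \<and> L eps \<ge> N0"
    have each: "g l ((real (Ms eps l))\<^sup>2 * sig2 eps * \<delta>\<^sup>2 / V l) \<le> \<eta> / 2" if l: "l \<le> L eps" for l
    proof (cases "V l > 0")
      case False then show ?thesis using eta by (simp add: g_def)
    next
      case True
      define B where "B = kap * exp (2 * alpha * real (L eps) - gamma * real l) * (S (L eps))\<^sup>2 * \<delta>\<^sup>2"
      have TB: "B \<le> (real (Ms eps l))\<^sup>2 * sig2 eps * \<delta>\<^sup>2 / V l"
      proof -
        have "kap * exp (2 * alpha * real (L eps) - gamma * real l) * (S (L eps))\<^sup>2 * \<delta>\<^sup>2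
            \<le> (real (Ms eps l))\<^sup>2 * sig2 eps / V l * \<delta>\<^sup>2"
          by (rule mult_right_mono[OF T_bound[OF conjunct1[OF a] True]]) simp
        then show ?thesis unfolding B_def by simp
      qed
      have SLl: "(S l)\<^sup>2 \<le> (S (L eps))\<^sup>2"
        using S_mono[OF l] S_pos[of l] by (intro power_mono) auto
      have SL0: "(S 0)\<^sup>2 \<le> (S (L eps))\<^sup>2"
        using S_mono[of 0 "L eps"] S0_pos by (intro power_mono) auto
      show ?thesis
      proof (cases "l \<ge> N0")
        case True
        have "exp ((2 * alpha - gamma) * real l) * (S l)\<^sup>2 * nu \<le> B"
        proof -
          have "exp ((2 * alpha - gamma) * real l) \<le> exp (2 * alpha * real (L eps) - gamma * real l)"
            using l apos by (simp add: algebra_simps)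
          then have "exp ((2 * alpha - gamma) * real l) * (S l)\<^sup>2 \<le> exp (2 * alpha * real (L eps) - gamma * real l) * (S (L eps))\<^sup>2"
            using SLl by (intro mult_mono) auto
          then show ?thesis unfolding B_def nu_def using kap_pos
            by (simp add: mult_left_mono mult_right_mono mult.commute mult.left_commute mult.assoc)
        qed
        then have "g l ((real (Ms eps l))\<^sup>2 * sig2 eps * \<delta>\<^sup>2 / V l) \<le> g l (exp ((2 * alpha - gamma) * real l) * (S l)\<^sup>2 * nu)"
          using TB by (intro g_anti) simp
        then show ?thesis using N0[OF True] by simp
      next
        case False
        have "cs \<le> B"
        proof -
          have "exp (- gamma * real N0) * exp (2 * alpha * real (L eps)) \<le> exp (2 * alpha * real (L eps) - gamma * real l)"
            using False gpos by (simp add: exp_add[symmetric] algebra_simps)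
          then have "exp (- gamma * real N0) * exp (2 * alpha * real (L eps)) * (S 0)\<^sup>2 \<le> exp (2 * alpha * real (L eps) - gamma * real l) * (S (L eps))\<^sup>2"
            using SL0 by (intro mult_mono) auto
          then have "K * exp (2 * alpha * real (L eps)) \<le> B"
            unfolding K_def B_def using kap_pos dpos
            by (simp add: mult_left_mono mult_right_mono mult.commute mult.left_commute mult.assoc)
          then show ?thesis using a by linarith
        qed
        then have "g l ((real (Ms eps l))\<^sup>2 * sig2 eps * \<delta>\<^sup>2 / V l) \<le> g l cs"
          using TB by (intro g_anti) simp
        then show ?thesis using cs[of l] False by simp
      qed
    qed
    have "Lsum eps \<delta> \<le> (\<Sum>l\<le>L eps. V l / (real (Ms eps l) * sig2 eps) * (\<eta> / 2))"
      unfolding Lsum_def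
    proof (rule sum_mono)
      fix l assume "l \<in> {..L eps}"
      then show "V l / (real (Ms eps l) * sig2 eps) * g l ((real (Ms eps l))\<^sup>2 * sig2 eps * \<delta>\<^sup>2 / V l)
          \<le> V l / (real (Ms eps l) * sig2 eps) * (\<eta> / 2)"
        by (intro mult_left_mono[OF each w_nn]) auto
    qed
    also have "\<dots> = \<eta> / 2" by (simp only: sum_distrib_right[symmetric] w_sum mult_1_left)
    finally show "dist (Lsum eps \<delta>) 0 < \<eta>" using Lsum_nn[of eps \<delta>] eta by simp
  qed
qed

end


context mlmc_loc begin

lemma max_cond:
  "((\<lambda>eps. Max ((\<lambda>l. V l /
               ((real (Ms eps l))\<^sup>2 * var N (mlmc M Xl Cost calpha alpha Y eps)))
               ` {0..L eps})) \<longlongrightarrow> 0) (at_right 0)"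
proof -
  define U where "U eps = exp ((gamma - 2 * alpha) * real (L eps)) / (S (L eps))\<^sup>2 / kap" for eps
  have "((\<lambda>eps. exp ((gamma - 2 * alpha) * real (L eps)) / (S (L eps))\<^sup>2) \<longlongrightarrow> 0) (at_right 0)"
    by (rule filterlim_compose[OF key L_top])
  from tendsto_divide[OF this tendsto_const, of kap] kap_pos
  have Ulim: "(U \<longlongrightarrow> 0) (at_right 0)" unfolding U_def by simp
  show ?thesis
  proof (rule real_tendsto_sandwich[OF _ _ tendsto_const Ulim])
    show "\<forall>\<^sub>F eps in at_right 0. 0 \<le> Max ((\<lambda>l. V l / ((real (Ms eps l))\<^sup>2 * var N (mlmc M Xl Cost calpha alpha Y eps))) ` {0..L eps})"
    proof (intro always_eventually allI)
      fix eps
      have "0 \<le> V 0 / ((real (Ms eps 0))\<^sup>2 * var N (mlmc M Xl Cost calpha alpha Y eps))"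
        using V_nn[of 0] sig2_pos[of eps] var_mlmc[of eps] by simp
      also have "\<dots> \<le> Max ((\<lambda>l. V l / ((real (Ms eps l))\<^sup>2 * var N (mlmc M Xl Cost calpha alpha Y eps))) ` {0..L eps})"
        by (rule Max_ge) auto
      finally show "0 \<le> Max ((\<lambda>l. V l / ((real (Ms eps l))\<^sup>2 * var N (mlmc M Xl Cost calpha alpha Y eps))) ` {0..L eps})" .
    qed
    show "\<forall>\<^sub>F eps in at_right 0. Max ((\<lambda>l. V l / ((real (Ms eps l))\<^sup>2 * var N (mlmc M Xl Cost calpha alpha Y eps))) ` {0..L eps}) \<le> U eps"
      using ev_good
    proof (rule eventually_mono)
      fix eps assume gd: "good eps"
      have Upos: "U eps \<ge> 0" unfolding U_def using kap_pos by simp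
      show "Max ((\<lambda>l. V l / ((real (Ms eps l))\<^sup>2 * var N (mlmc M Xl Cost calpha alpha Y eps))) ` {0..L eps}) \<le> U eps"
      proof (subst Max_le_iff, simp, simp, intro ballI)
        fix x assume "x \<in> (\<lambda>l. V l / ((real (Ms eps l))\<^sup>2 * var N (mlmc M Xl Cost calpha alpha Y eps))) ` {0..L eps}"
        then obtain l where l: "l \<le> L eps" and x: "x = V l / ((real (Ms eps l))\<^sup>2 * sig2 eps)"
          using var_mlmc[of eps] by auto
        show "x \<le> U eps"
        proof (cases "V l > 0")
          case False then show ?thesis using x Upos V_nn[of l] by simp
        next
          case True
          define T where "T = (real (Ms eps l))\<^sup>2 * sig2 eps / V l"
          define B where "B = kap * exp (2 * alpha * real (L eps) - gamma * real l) * (S (L eps))\<^sup>2"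
          have TB: "B \<le> T" unfolding T_def B_def by (rule T_bound[OF gd True])
          have Bpos: "B > 0" unfolding B_def using kap_pos S_pos[of "L eps"] by simp
          have xT: "x = 1 / T" unfolding x T_def using True by simp
          have "x \<le> 1 / B" unfolding xT using TB Bpos by (simp add: frac_le)
          also have "1 / B \<le> U eps"
          proof -
            have "exp ((2 * alpha - gamma) * real (L eps)) \<le> exp (2 * alpha * real (L eps) - gamma * real l)"
              using l gpos by (simp add: algebra_simps)
            then have "kap * exp ((2 * alpha - gamma) * real (L eps)) * (S (L eps))\<^sup>2 \<le> B"
              unfolding B_def using kap_pos by (intro mult_right_mono mult_left_mono) auto
            moreover have "kap * exp ((2 * alpha - gamma) * real (L eps)) * (S (L eps))\<^sup>2 > 0"
              using kap_pos S_pos[of "L eps"] by simp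
            ultimately have "1 / B \<le> 1 / (kap * exp ((2 * alpha - gamma) * real (L eps)) * (S (L eps))\<^sup>2)"
              by (simp add: frac_le)
            also have "\<dots> = U eps"
            proof -
              have "exp ((gamma - 2 * alpha) * real (L eps)) = inverse (exp ((2 * alpha - gamma) * real (L eps)))"
                by (subst exp_minus[symmetric]) (simp add: algebra_simps)
              then show ?thesis unfolding U_def by (simp add: divide_inverse mult.commute mult.left_commute)
            qed
            finally show ?thesis .
          qed
          finally show ?thesis .
        qed
      qed
    qed
  qed
qed

lemma char_bound:
  assumes dpos: "\<delta> > 0"
  shows "cmod (char (distr N borel (\<lambda>\<omega>. \<Sum>j\<in>J eps. W eps j \<omega> / sqrt (sig2 eps))) t - complex_of_real (exp (- (t\<^sup>2) / 2)))
     \<le> \<bar>t\<bar>^3 * \<delta> / 6 + t\<^sup>2 * Lsum eps \<delta> + t^4 * (\<delta>\<^sup>2 + Lsum eps \<delta>) / 4"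
proof -
  define s where "s = sqrt (sig2 eps)"
  have s: "s > 0" unfolding s_def using sig2_pos[of eps] by simp
  have s2: "s\<^sup>2 = sig2 eps" unfolding s_def using sig2_pos[of eps] by simp
  define Lam where "Lam = (\<Sum>j\<in>J eps. N.expectation (\<lambda>\<omega>. (W eps j \<omega> / sqrt (sig2 eps))\<^sup>2 *
            indicator {\<omega>. (W eps j \<omega> / sqrt (sig2 eps))\<^sup>2 > \<delta>\<^sup>2} \<omega>))"
  have ind: "N.indep_vars (\<lambda>_. borel) (\<lambda>j \<omega>. W eps j \<omega> / sqrt (sig2 eps)) (J eps)"
    by (rule N.indep_vars_compose2[OF W_indep[of eps], where Y="\<lambda>j y. y / sqrt (sig2 eps)"]) measurable
  have lb: "cmod (char (distr N borel (\<lambda>\<omega>. \<Sum>j\<in>J eps. W eps j \<omega> / sqrt (sig2 eps))) t - complex_of_real (exp (- (t\<^sup>2) / 2)))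
     \<le> \<bar>t\<bar>^3 * \<delta> / 6 + t\<^sup>2 * Lam + t^4 * (\<delta>\<^sup>2 + Lam) / 4"
    unfolding Lam_def
  proof (rule N.lindeberg_bound[OF finJ ind _ _ _ dpos])
    fix j assume "j \<in> J eps"
    show "integrable N (\<lambda>\<omega>. (W eps j \<omega> / sqrt (sig2 eps))\<^sup>2)"
      using W_facts(2)[of eps j] by (simp add: power_divide)
    show "N.expectation (\<lambda>\<omega>. W eps j \<omega> / sqrt (sig2 eps)) = 0"
      using W_facts(1)[of eps j] by simp
  next
    have "(\<Sum>j\<in>J eps. N.expectation (\<lambda>\<omega>. (W eps j \<omega> / sqrt (sig2 eps))\<^sup>2))
        = (\<Sum>j\<in>J eps. N.expectation (\<lambda>\<omega>. (W eps j \<omega>)\<^sup>2)) / sig2 eps"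
      using sig2_pos[of eps] by (simp add: power_divide sum_divide_distrib)
    also have "\<dots> = 1" unfolding sum_EW2 using sig2_pos[of eps] by simp
    finally show "(\<Sum>j\<in>J eps. N.expectation (\<lambda>\<omega>. (W eps j \<omega> / sqrt (sig2 eps))\<^sup>2)) = 1" .
  qed
  have LL: "Lam \<le> Lsum eps \<delta>" unfolding Lam_def by (rule Lam_le[OF dpos])
  have "\<bar>t\<bar>^3 * \<delta> / 6 + t\<^sup>2 * Lam + t^4 * (\<delta>\<^sup>2 + Lam) / 4 \<le> \<bar>t\<bar>^3 * \<delta> / 6 + t\<^sup>2 * Lsum eps \<delta> + t^4 * (\<delta>\<^sup>2 + Lsum eps \<delta>) / 4"
    using LL by (intro add_mono divide_right_mono mult_left_mono order_refl) auto
  with lb show ?thesis by linarith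
qed

lemma distr_eq:
  "distr N borel (\<lambda>\<omega>. (mlmc M Xl Cost calpha alpha Y eps \<omega> - expct M (Xl (L eps)))
                    / sqrt (var N (mlmc M Xl Cost calpha alpha Y eps)))
   = distr N borel (\<lambda>\<omega>. \<Sum>j\<in>J eps. W eps j \<omega> / sqrt (sig2 eps))"
  by (rule distr_cong[OF refl refl]) (simp add: mlmc_eq var_mlmc sum_divide_distrib)

lemma clt:
  "conv_distr_at_right0
     (\<lambda>eps. distr N borel
        (\<lambda>\<omega>. (mlmc M Xl Cost calpha alpha Y eps \<omega> - expct M (Xl (L eps)))
              / sqrt (var N (mlmc M Xl Cost calpha alpha Y eps))))
     std_normal_distribution"
  unfolding conv_distr_at_right0_def distr_eq
proof (intro allI impI)
  fix e :: "nat \<Rightarrow> real" assume epos: "\<forall>n. 0 < e n" and elim: "e \<longlonglongrightarrow> 0"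
  have ef: "filterlim e (at_right 0) sequentially"
    by (rule tendsto_imp_filterlim_at_right[OF elim]) (use epos in simp)
  show "weak_conv_m (\<lambda>n. distr N borel (\<lambda>\<omega>. \<Sum>j\<in>J (e n). W (e n) j \<omega> / sqrt (sig2 (e n)))) std_normal_distribution"
  proof (rule levy_continuity)
    fix n show "real_distribution (distr N borel (\<lambda>\<omega>. \<Sum>j\<in>J (e n). W (e n) j \<omega> / sqrt (sig2 (e n))))"
      by (rule N.real_distribution_distr) measurable
  next
    show "real_distribution std_normal_distribution" by (rule real_dist_normal_dist)
  next
    fix t :: real
    show "(\<lambda>n. char (distr N borel (\<lambda>\<omega>. \<Sum>j\<in>J (e n). W (e n) j \<omega> / sqrt (sig2 (e n)))) t) \<longlonglongrightarrow> char std_normal_distribution t"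
      unfolding char_std_normal_distribution
    proof (rule LIMSEQ_I)
      fix r :: real assume r: "r > 0"
      define P where "P = \<bar>t\<bar>^3 + t^4 + 1"
      have "0 \<le> \<bar>t\<bar>^3 + t^4" by simp
      then have P: "P > 0" unfolding P_def by linarith
      define \<delta> where "\<delta> = min 1 (r / (4 * P))"
      have d: "\<delta> > 0" "\<delta> \<le> 1" "\<delta> \<le> r / (4 * P)" unfolding \<delta>_def using r P by auto
      have lim: "((\<lambda>n. Lsum (e n) \<delta>) \<longlongrightarrow> 0) sequentially"
        by (rule filterlim_compose[OF Lsum_lim[OF d(1)] ef])
      have "0 \<le> t\<^sup>2 + t^4" by simp
      then have "0 < t\<^sup>2 + t^4 + 1" by linarith
      then have q: "r / (4 * (t\<^sup>2 + t^4 + 1)) > 0" using r by simp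
      from order_tendstoD(2)[OF lim q] obtain n0 where n0: "\<And>n. n \<ge> n0 \<Longrightarrow> Lsum (e n) \<delta> < r / (4 * (t\<^sup>2 + t^4 + 1))"
        by (auto simp: eventually_sequentially)
      show "\<exists>no. \<forall>n\<ge>no. norm (char (distr N borel (\<lambda>\<omega>. \<Sum>j\<in>J (e n). W (e n) j \<omega> / sqrt (sig2 (e n)))) t - complex_of_real (exp (- (t\<^sup>2) / 2))) < r"
      proof (intro exI allI impI)
        fix n assume "n \<ge> n0"
        define Ls where "Ls = Lsum (e n) \<delta>"
        have Ls: "Ls \<ge> 0" "Ls < r / (4 * (t\<^sup>2 + t^4 + 1))"
          unfolding Ls_def using n0[OF \<open>n \<ge> n0\<close>] Lsum_nn by auto
        have b: "norm (char (distr N borel (\<lambda>\<omega>. \<Sum>j\<in>J (e n). W (e n) j \<omega> / sqrt (sig2 (e n)))) t - complex_of_real (exp (- (t\<^sup>2) / 2)))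
            \<le> \<bar>t\<bar>^3 * \<delta> / 6 + t\<^sup>2 * Ls + t^4 * (\<delta>\<^sup>2 + Ls) / 4"
          unfolding Ls_def by (rule char_bound[OF d(1)])
        have p1: "\<bar>t\<bar>^3 * \<delta> / 6 + t^4 * \<delta>\<^sup>2 / 4 \<le> \<delta> * P"
        proof -
          have "\<delta>\<^sup>2 \<le> \<delta>" using d by (simp add: power2_eq_square mult_left_le_one_le)
          then have "t^4 * \<delta>\<^sup>2 \<le> t^4 * \<delta>" by (rule mult_left_mono) simp
          moreover have "\<bar>t\<bar>^3 * \<delta> / 6 \<le> \<bar>t\<bar>^3 * \<delta>" using d by simp
          moreover have "0 \<le> \<bar>t\<bar>^3 * \<delta>" "0 \<le> t^4 * \<delta>\<^sup>2" using d by auto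
          moreover have "\<delta> * P = \<bar>t\<bar>^3 * \<delta> + t^4 * \<delta> + \<delta>" by (simp add: P_def algebra_simps)
          ultimately show ?thesis using d by linarith
        qed
        have p2: "\<delta> * P \<le> r / 4" using d(3) P by (simp add: le_divide_eq ac_simps)
        have p3: "t\<^sup>2 * Ls + t^4 * Ls / 4 \<le> Ls * (t\<^sup>2 + t^4 + 1)"
          using Ls by (simp add: algebra_simps)
        have p4: "Ls * (t\<^sup>2 + t^4 + 1) < r / 4"
        proof -
          have "0 \<le> t\<^sup>2 + t^4" by simp
          then have "0 < t\<^sup>2 + t^4 + 1" by linarith
          then have "0 < 4 * (t\<^sup>2 + t^4 + 1)" by simp
          then show ?thesis using Ls(2) by (simp add: less_divide_eq algebra_simps)
        qed
        have "\<bar>t\<bar>^3 * \<delta> / 6 + t\<^sup>2 * Ls + t^4 * (\<delta>\<^sup>2 + Ls) / 4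
           = (\<bar>t\<bar>^3 * \<delta> / 6 + t^4 * \<delta>\<^sup>2 / 4) + (t\<^sup>2 * Ls + t^4 * Ls / 4)" by (simp add: algebra_simps)
        also have "\<dots> < r" using p1 p2 p3 p4 r by linarith
        finally show "norm (char (distr N borel (\<lambda>\<omega>. \<Sum>j\<in>J (e n). W (e n) j \<omega> / sqrt (sig2 (e n)))) t - complex_of_real (exp (- (t\<^sup>2) / 2))) < r"
          using b by linarith
      qed
    qed
  qed
qed

end


theorem theorem3:
  fixes M :: "'a measure" and N :: "'b measure"
    and X :: "'a \<Rightarrow> real" and Xl :: "nat \<Rightarrow> 'a \<Rightarrow> real"
    and Cost :: "nat \<Rightarrow> real"
    and Y :: "nat \<Rightarrow> nat \<Rightarrow> 'b \<Rightarrow> real"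
    and alpha beta gamma calpha :: real
  assumes probM: "prob_space M"
    and probN: "prob_space N"
    (* X and all X_l are in L^2 *)
    and X_meas: "X \<in> borel_measurable M"
    and X_L2: "integrable M (\<lambda>\<omega>. (X \<omega>)\<^sup>2)"
    and Xl_meas: "\<And>l. Xl l \<in> borel_measurable M"
    and Xl_L2: "\<And>l. integrable M (\<lambda>\<omega>. (Xl l \<omega>)\<^sup>2)"
    (* i.i.d. copies of the level differences *)
    and indep: "prob_space.indep_vars N (\<lambda>_. borel) (\<lambda>(l, i). Y l i) UNIV"
    and law: "\<And>l i. distr N borel (Y l i) = distr M borel (dlt Xl l)"
    (* Assumption A *)
    and pos: "alpha > 0" "beta > 0" "gamma > 0" "calpha > 0"
    and minle: "min beta gamma \<le> 2 * alpha"
    and bias: "\<And>l. \<bar>expct M (\<lambda>\<omega>. X \<omega> - Xl l \<omega>)\<bar> \<le> calpha * exp (- alpha * real l)"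
    and varbd: "\<exists>C>0. \<forall>l. Vl M Xl l \<le> C * exp (- beta * real l)"
    and costbd: "\<exists>c C'. 0 < c \<and> c < C' \<and>
                   (\<forall>l. c * exp (gamma * real l) < Cost l \<and> Cost l < C' * exp (gamma * real l))"
    (* gamma >= beta *)
    and gb: "gamma \<ge> beta"
    (* Assumption B *)
    and V0: "Vl M Xl 0 > 0"
    and B_eq: "beta = gamma \<Longrightarrow> filterlim (Ssum M Xl Cost) at_top sequentially"
    and B_gt: "gamma > beta \<Longrightarrow> beta < 2 * alpha \<and>
                 (\<exists>u. beta \<le> u \<and> u < 2 * alpha \<and>
                   liminf (\<lambda>k. ereal (Ssum M Xl Cost k * exp ((u - gamma) * real k / 2))) > 1)"
    (* Lindeberg-type condition *)
    and lindeberg: "\<And>\<nu>. \<nu> > 0 \<Longrightarrow>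
       (\<lambda>l. if Vl M Xl l > 0 then
              expct M (\<lambda>\<omega>. ((dlt Xl l \<omega> - expct M (dlt Xl l))\<^sup>2 / Vl M Xl l) *
                 indicator {\<omega>. (dlt Xl l \<omega> - expct M (dlt Xl l))\<^sup>2 / Vl M Xl l >
                     exp ((2 * alpha - gamma) * real l) * (Ssum M Xl Cost l)\<^sup>2 * \<nu>} \<omega>)
            else 0) \<longlonglongrightarrow> 0"
  shows "conv_distr_at_right0
           (\<lambda>eps. distr N borel
              (\<lambda>\<omega>. (mlmc M Xl Cost calpha alpha Y eps \<omega> - expct M (Xl (Lev calpha alpha eps)))
                    / sqrt (var N (mlmc M Xl Cost calpha alpha Y eps))))
           std_normal_distribution
       \<and> ((\<lambda>eps. Max ((\<lambda>l. Vl M Xl l /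
               ((real (Msamp M Xl Cost calpha alpha eps l))\<^sup>2 * var N (mlmc M Xl Cost calpha alpha Y eps)))
               ` {0..Lev calpha alpha eps})) \<longlongrightarrow> 0) (at_right 0)"
proof -
  interpret mlmc_loc M N Xl Cost Y alpha beta gamma calpha
    by (rule mlmc_loc.intro[OF probM probN], rule mlmc_loc_axioms.intro) (fact assms)+
  show ?thesis using clt max_cond by simp
qed

end
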